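(* Let $q$ be a prime power and let $m,\ell,r_1,\dots,r_m,k,N$ be positive integers with $\ell\le k\le m\ell$ and $N\ge m\ell$, and set $n:=\sum_{i=1}^m(\ell+r_i)$. Let $\widetilde G\in\mathbb{F}_{q^N}^{k\times m\ell}$ be a generator matrix of an $\mathbb{F}_{q^N}$-linear MRD code of length $m\ell$ and dimension $k$. For $i=1,\dots,m$ let $M_i\in\mathbb{F}_q^{\ell\times(\ell+r_i)}$ be a generator matrix of an $[\ell+r_i,\ell]$-MDS code over $\mathbb{F}_q$, and let $M\in\mathbb{F}_q^{m\ell\times n}$ be the block-diagonal matrix with diagonal blocks $M_1,\dots,M_m$ (all other entries zero). Then $\widetilde G M$ is a generator matrix of an $[n,k,\ell;r_1,\dots,r_m]$-PMDS code over $\mathbb{F}_{q^N}$, where the blocks are the consecutive column groups of sizes $\ell+r_1,\dots,\ell+r_m$.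
   Context: An $[n,k]$-MDS code over a field $\mathbb{F}$ is a linear code in $\mathbb{F}^n$ of dimension $k$ and minimum Hamming distance $n-k+1$. PMDS codes: let $\ell,m,r_1,\dots,r_m$ be positive integers, $n=\sum_{i=1}^m(r_i+\ell)$, and $C\subseteq\mathbb{F}^n$ a linear code of dimension $k<n$ with generator matrix $G=(B_1\mid\dots\mid B_m)$, $B_i\in\mathbb{F}^{k\times(r_i+\ell)}$. Then $C$ is an $[n,k,\ell;r_1,\dots,r_m]$-PMDS code if (i) for each $i$ the row space of $B_i$ is an $[r_i+\ell,\ell]$-MDS code, and (ii) for any choice of $r_i$ erased coordinates in the $i$-th block for every $i$, the code obtained from $C$ by puncturing these coordinates is an $[m\ell,k]$-MDS code. Rank metric: fixing an $\mathbb{F}_q$-basis of $\mathbb{F}_{q^N}$, each $u\in\mathbb{F}_{q^N}^{n'}$ is identified with a matrix in $\mathbb{F}_q^{N\times n'}$; the rank distance $d_R(u,v)$ is the rank of the matrix of $u-v$. An $\mathbb{F}_{q^N}$-linear rank-metric code of length $n'$ and dimension $k$ is a $k$-dimensional $\mathbb{F}_{q^N}$-subspace of $\mathbb{F}_{q^N}^{n'}$; it is MRD (maximum rank distance) if its minimum rank distance equals $n'-k+1$. *)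

theory Defs
  imports "Jordan_Normal_Form.DL_Submatrix" "HOL-Computational_Algebra.Primes"
begin

text \<open>The big field F_{q^N} is the (finite) type 'a, the small field F_q is a subfield F.\<close>

definition is_subfield :: "'a::field set \<Rightarrow> bool" where
  "is_subfield K \<longleftrightarrow> 0 \<in> K \<and> 1 \<in> K \<and> (\<forall>x\<in>K. \<forall>y\<in>K. x + y \<in> K \<and> x - y \<in> K \<and> x * y \<in> K)
     \<and> (\<forall>x\<in>K. inverse x \<in> K)"

definition vecs_over :: "'a set \<Rightarrow> nat \<Rightarrow> 'a vec set" where
  "vecs_over K n = {v. v \<in> carrier_vec n \<and> (\<forall>j<n. v $ j \<in> K)}"

definition indep_vecs :: "'a::field set \<Rightarrow> nat \<Rightarrow> 'a vec set \<Rightarrow> bool" where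
  "indep_vecs K n S \<longleftrightarrow> finite S \<and>
     (\<forall>c. (\<forall>v\<in>S. c v \<in> K) \<longrightarrow> (\<forall>j<n. (\<Sum>v\<in>S. c v * v $ j) = 0) \<longrightarrow> (\<forall>v\<in>S. c v = 0))"

definition is_subspace :: "'a::field set \<Rightarrow> nat \<Rightarrow> 'a vec set \<Rightarrow> bool" where
  "is_subspace K n C \<longleftrightarrow> C \<subseteq> vecs_over K n \<and> 0\<^sub>v n \<in> C \<and>
     (\<forall>u\<in>C. \<forall>v\<in>C. u + v \<in> C) \<and> (\<forall>a\<in>K. \<forall>u\<in>C. a \<cdot>\<^sub>v u \<in> C)"

definition dim_over :: "'a::field set \<Rightarrow> nat \<Rightarrow> 'a vec set \<Rightarrow> nat" where
  "dim_over K n C = Max {card S | S. S \<subseteq> C \<and> indep_vecs K n S}"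

definition row_space :: "'a::field set \<Rightarrow> 'a mat \<Rightarrow> 'a vec set" where
  "row_space K G = {vec (dim_col G) (\<lambda>j. \<Sum>i<dim_row G. x i * G $$ (i, j)) | x. \<forall>i<dim_row G. x i \<in> K}"

definition hamming_dist :: "nat \<Rightarrow> 'a::field vec \<Rightarrow> 'a vec \<Rightarrow> nat" where
  "hamming_dist n u v = card {j. j < n \<and> u $ j \<noteq> v $ j}"

definition min_hamming_dist :: "nat \<Rightarrow> 'a::field vec set \<Rightarrow> nat" where
  "min_hamming_dist n C = Min {hamming_dist n u v | u v. u \<in> C \<and> v \<in> C \<and> u \<noteq> v}"

definition is_MDS :: "'a::field set \<Rightarrow> nat \<Rightarrow> nat \<Rightarrow> 'a vec set \<Rightarrow> bool" where
  "is_MDS K n k C \<longleftrightarrow> is_subspace K n C \<and> dim_over K n C = k \<and> min_hamming_dist n C = n - k + 1"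

definition indep_scalars :: "'a::field set \<Rightarrow> 'a set \<Rightarrow> bool" where
  "indep_scalars F S \<longleftrightarrow> finite S \<and>
     (\<forall>c. (\<forall>x\<in>S. c x \<in> F) \<longrightarrow> (\<Sum>x\<in>S. c x * x) = 0 \<longrightarrow> (\<forall>x\<in>S. c x = 0))"

text \<open>Rank weight of u (length n) over the subfield F: the rank of the F-matrix obtained by
  expanding the entries of u in an F-basis, i.e. the F-dimension of the F-span of the
  entries of u (column rank).\<close>
definition rank_weight :: "'a::field set \<Rightarrow> nat \<Rightarrow> 'a vec \<Rightarrow> nat" where
  "rank_weight F n u = Max {card S | S. S \<subseteq> (\<lambda>j. u $ j) ` {..<n} \<and> indep_scalars F S}"

definition rank_dist :: "'a::field set \<Rightarrow> nat \<Rightarrow> 'a vec \<Rightarrow> 'a vec \<Rightarrow> nat" where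
  "rank_dist F n u v = rank_weight F n (u - v)"

definition min_rank_dist :: "'a::field set \<Rightarrow> nat \<Rightarrow> 'a vec set \<Rightarrow> nat" where
  "min_rank_dist F n C = Min {rank_dist F n u v | u v. u \<in> C \<and> v \<in> C \<and> u \<noteq> v}"

definition is_MRD :: "'a::field set \<Rightarrow> nat \<Rightarrow> nat \<Rightarrow> 'a vec set \<Rightarrow> bool" where
  "is_MRD F n k C \<longleftrightarrow> is_subspace UNIV n C \<and> dim_over UNIV n C = k \<and> min_rank_dist F n C = n - k + 1"

text \<open>Column offsets and column index sets of the blocks (0-based block index i < m).\<close>
definition block_off :: "nat \<Rightarrow> (nat \<Rightarrow> nat) \<Rightarrow> nat \<Rightarrow> nat" where
  "block_off l r i = (\<Sum>j<i. l + r j)"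

definition block_cols :: "nat \<Rightarrow> (nat \<Rightarrow> nat) \<Rightarrow> nat \<Rightarrow> nat set" where
  "block_cols l r i = {block_off l r i ..< block_off l r i + (l + r i)}"

definition block_diag :: "nat \<Rightarrow> nat \<Rightarrow> (nat \<Rightarrow> nat) \<Rightarrow> (nat \<Rightarrow> 'a::zero mat) \<Rightarrow> 'a mat" where
  "block_diag m l r Ms = mat (m * l) (\<Sum>i<m. l + r i)
     (\<lambda>(a, b). if a div l < m \<and> b \<in> block_cols l r (a div l)
               then Ms (a div l) $$ (a mod l, b - block_off l r (a div l)) else 0)"

definition is_generator :: "'a::field set \<Rightarrow> nat \<Rightarrow> nat \<Rightarrow> 'a mat \<Rightarrow> bool" where
  "is_generator K k n G \<longleftrightarrow> G \<in> carrier_mat k n \<and> (\<forall>i<k. \<forall>j<n. G $$ (i, j) \<in> K)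
     \<and> dim_over K n (row_space K G) = k"

definition is_PMDS_generator :: "'a::field set \<Rightarrow> nat \<Rightarrow> nat \<Rightarrow> nat \<Rightarrow> (nat \<Rightarrow> nat) \<Rightarrow> 'a mat \<Rightarrow> bool" where
  "is_PMDS_generator K k l m r G \<longleftrightarrow>
     (let n = (\<Sum>i<m. r i + l) in
      is_generator K k n G \<and> k < n \<and>
      (\<forall>i<m. is_MDS K (r i + l) l (row_space K (submatrix G UNIV (block_cols l r i)))) \<and>
      (\<forall>E. (\<forall>i<m. card (E \<inter> block_cols l r i) = r i)
           \<and> E \<subseteq> {..<n} \<longrightarrow>
           is_MDS K (m * l) k (row_space K (submatrix G UNIV ({..<n} - E)))))"

end

theory Submission
  imports Defs "Jordan_Normal_Form.Determinant"
begin


lemma sf_UNIV: "is_subfield (UNIV :: 'a::field set)"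
  unfolding is_subfield_def by auto

lemma sf_0: "is_subfield K \<Longrightarrow> 0 \<in> K" unfolding is_subfield_def by auto
lemma sf_1: "is_subfield K \<Longrightarrow> 1 \<in> K" unfolding is_subfield_def by auto
lemma sf_add: "is_subfield K \<Longrightarrow> x \<in> K \<Longrightarrow> y \<in> K \<Longrightarrow> x + y \<in> K" unfolding is_subfield_def by auto
lemma sf_diff: "is_subfield K \<Longrightarrow> x \<in> K \<Longrightarrow> y \<in> K \<Longrightarrow> x - y \<in> K" unfolding is_subfield_def by auto
lemma sf_mult: "is_subfield K \<Longrightarrow> x \<in> K \<Longrightarrow> y \<in> K \<Longrightarrow> x * y \<in> K" unfolding is_subfield_def by auto
lemma sf_inv: "is_subfield K \<Longrightarrow> x \<in> K \<Longrightarrow> inverse x \<in> K" unfolding is_subfield_def by auto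
lemma sf_uminus: "is_subfield K \<Longrightarrow> x \<in> K \<Longrightarrow> - x \<in> K"
  using sf_diff[of K 0 x] sf_0[of K] by simp
lemma sf_div: "is_subfield K \<Longrightarrow> x \<in> K \<Longrightarrow> y \<in> K \<Longrightarrow> x / y \<in> K"
  by (simp add: divide_inverse sf_inv sf_mult)
lemma sf_sum: "is_subfield K \<Longrightarrow> (\<And>i. i \<in> A \<Longrightarrow> f i \<in> K) \<Longrightarrow> sum f A \<in> K"
proof (induction A rule: infinite_finite_induct)
  case (infinite A) then show ?case by (simp add: sf_0)
next
  case empty then show ?case by (simp add: sf_0)
next
  case (insert x F) then show ?case by (simp add: sf_add)
qed

lemma homog:
  assumes K: "is_subfield K" and fJ: "finite J"
  shows "finite R \<Longrightarrow> card J < card R \<Longrightarrow> (\<forall>i\<in>R. \<forall>j\<in>J. A i j \<in> K) \<Longrightarrow>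
    \<exists>x. (\<forall>i\<in>R. x i \<in> K) \<and> (\<exists>i\<in>R. x i \<noteq> 0) \<and> (\<forall>j\<in>J. (\<Sum>i\<in>R. x i * A i j) = 0)"
  using fJ
proof (induction J arbitrary: R A rule: finite_induct)
  case empty
  then have "R \<noteq> {}" by auto
  then obtain i0 where "i0 \<in> R" by blast
  then show ?case
    by (intro exI[of _ "\<lambda>i. if i = i0 then 1 else 0"]) (auto simp: sf_0 sf_1 K)
next
  case (insert b J)
  show ?case
  proof (cases "\<forall>i\<in>R. A i b = 0")
    case True
    have "card J < card R" using insert by simp
    moreover have "\<forall>i\<in>R. \<forall>j\<in>J. A i j \<in> K" using insert.prems(3) by auto
    ultimately obtain x where x: "\<forall>i\<in>R. x i \<in> K" "\<exists>i\<in>R. x i \<noteq> 0" "\<forall>j\<in>J. (\<Sum>i\<in>R. x i * A i j) = 0"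
      using insert.IH[OF insert.prems(1)] by blast
    then show ?thesis using True by (intro exI[of _ x]) auto
  next
    case False
    then obtain p where p: "p \<in> R" "A p b \<noteq> 0" by auto
    define R' where "R' = R - {p}"
    define A' where "A' i j = A i j - A i b / A p b * A p j" for i j
    have fR': "finite R'" using insert.prems R'_def by auto
    have cR': "card J < card R'" using insert.prems insert.hyps p unfolding R'_def by auto
    have A'K: "\<forall>i\<in>R'. \<forall>j\<in>J. A' i j \<in> K"
      using insert.prems(3) p unfolding A'_def R'_def
      by (auto intro!: sf_diff sf_mult sf_div K)
    from insert.IH[OF fR' cR' A'K]
    obtain y where y: "\<forall>i\<in>R'. y i \<in> K" "\<exists>i\<in>R'. y i \<noteq> 0"
      "\<forall>j\<in>J. (\<Sum>i\<in>R'. y i * A' i j) = 0" by auto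
    define s where "s = (\<Sum>i\<in>R'. y i * A i b)"
    define x where "x i = (if i = p then - s / A p b else y i)" for i
    have sumR: "(\<Sum>i\<in>R. x i * A i j) = x p * A p j + (\<Sum>i\<in>R'. y i * A i j)" for j
    proof -
      have "(\<Sum>i\<in>R. x i * A i j) = x p * A p j + (\<Sum>i\<in>R'. x i * A i j)"
        using p insert.prems(1) unfolding R'_def by (simp add: sum.remove)
      also have "(\<Sum>i\<in>R'. x i * A i j) = (\<Sum>i\<in>R'. y i * A i j)"
        by (rule sum.cong) (auto simp: x_def R'_def)
      finally show ?thesis .
    qed
    have "\<forall>i\<in>R. x i \<in> K"
      using y(1) insert.prems(3) p unfolding x_def s_def R'_def
      by (auto intro!: sf_div sf_uminus sf_sum sf_mult K)
    moreover have "\<exists>i\<in>R. x i \<noteq> 0" using y(2) unfolding x_def R'_def by auto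
    moreover have "\<forall>j\<in>insert b J. (\<Sum>i\<in>R. x i * A i j) = 0"
    proof
      fix j assume j: "j \<in> insert b J"
      show "(\<Sum>i\<in>R. x i * A i j) = 0"
      proof (cases "j = b")
        case True
        then show ?thesis unfolding sumR using p by (simp add: x_def s_def)
      next
        case False
        then have jJ: "j \<in> J" using j by auto
        have "0 = (\<Sum>i\<in>R'. y i * A' i j)" using y(3) jJ by simp
        also have "\<dots> = (\<Sum>i\<in>R'. y i * A i j) - s / A p b * A p j"
          unfolding A'_def s_def
          by (simp add: right_diff_distrib sum_subtractf sum_distrib_right sum_divide_distrib mult.assoc)
        finally show ?thesis unfolding sumR using p by (simp add: x_def)
      qed
    qed
    ultimately show ?thesis by blast
  qed
qed



lemma scal_card_le:
  assumes K: "is_subfield K" and ind: "indep_scalars K S" and fT: "finite T"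
    and sp: "\<forall>s\<in>S. \<exists>c. (\<forall>t\<in>T. c t \<in> K) \<and> s = (\<Sum>t\<in>T. c t * w t)"
  shows "card S \<le> card T"
proof (rule ccontr)
  assume "\<not> ?thesis" hence lt: "card T < card S" by simp
  from sp obtain cf where cf: "\<forall>s\<in>S. (\<forall>t\<in>T. cf s t \<in> K) \<and> s = (\<Sum>t\<in>T. cf s t * w t)"
    using bchoice[OF sp] by blast
  have fS: "finite S" using ind unfolding indep_scalars_def by auto
  from homog[OF K fT fS lt, of cf] cf
  obtain x where x: "\<forall>s\<in>S. x s \<in> K" "\<exists>s\<in>S. x s \<noteq> 0" "\<forall>t\<in>T. (\<Sum>s\<in>S. x s * cf s t) = 0"
    by auto
  have "(\<Sum>s\<in>S. x s * s) = (\<Sum>s\<in>S. x s * (\<Sum>t\<in>T. cf s t * w t))"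
    using cf by (intro sum.cong) auto
  also have "\<dots> = (\<Sum>s\<in>S. \<Sum>t\<in>T. x s * (cf s t * w t))"
    by (simp add: sum_distrib_left mult.assoc)
  also have "\<dots> = (\<Sum>t\<in>T. \<Sum>s\<in>S. x s * (cf s t * w t))"
    by (rule sum.swap)
  also have "\<dots> = (\<Sum>t\<in>T. (\<Sum>s\<in>S. x s * cf s t) * w t)"
    by (simp add: sum_distrib_right mult.assoc)
  also have "\<dots> = 0" using x(3) by simp
  finally have "\<forall>s\<in>S. x s = 0" using ind x(1) unfolding indep_scalars_def by blast
  then show False using x(2) by blast
qed

lemma vec_card_le:
  assumes K: "is_subfield K" and ind: "indep_vecs K n S" and fT: "finite T"
    and sp: "\<forall>v\<in>S. \<exists>c. (\<forall>t\<in>T. c t \<in> K) \<and> (\<forall>j<n. v $ j = (\<Sum>t\<in>T. c t * W t j))"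
  shows "card S \<le> card T"
proof (rule ccontr)
  assume "\<not> ?thesis" hence lt: "card T < card S" by simp
  from sp obtain cf where cf: "\<forall>v\<in>S. (\<forall>t\<in>T. cf v t \<in> K) \<and> (\<forall>j<n. v $ j = (\<Sum>t\<in>T. cf v t * W t j))"
    using bchoice[OF sp] by blast
  have fS: "finite S" using ind unfolding indep_vecs_def by auto
  from homog[OF K fT fS lt, of cf] cf
  obtain x where x: "\<forall>s\<in>S. x s \<in> K" "\<exists>s\<in>S. x s \<noteq> 0" "\<forall>t\<in>T. (\<Sum>s\<in>S. x s * cf s t) = 0"
    by auto
  have "(\<Sum>v\<in>S. x v * v $ j) = 0" if j: "j < n" for j
  proof -
    have "(\<Sum>v\<in>S. x v * v $ j) = (\<Sum>v\<in>S. x v * (\<Sum>t\<in>T. cf v t * W t j))"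
      using cf j by (intro sum.cong) auto
    also have "\<dots> = (\<Sum>s\<in>S. \<Sum>t\<in>T. x s * (cf s t * W t j))"
      by (simp add: sum_distrib_left mult.assoc)
  also have "\<dots> = (\<Sum>t\<in>T. \<Sum>s\<in>S. x s * (cf s t * W t j))"
    by (rule sum.swap)
  also have "\<dots> = (\<Sum>t\<in>T. (\<Sum>s\<in>S. x s * cf s t) * W t j)"
    by (simp add: sum_distrib_right mult.assoc)
    also have "\<dots> = 0" using x(3) by simp
    finally show ?thesis .
  qed
  then have "\<forall>s\<in>S. x s = 0" using ind x(1) unfolding indep_vecs_def by blast
  then show False using x(2) by blast
qed

lemma rw_le:
  assumes K: "is_subfield F" and fT: "finite T"
    and sp: "\<forall>a<n. \<exists>c. (\<forall>t\<in>T. c t \<in> F) \<and> u $ a = (\<Sum>t\<in>T. c t * w t)"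
  shows "rank_weight F n u \<le> card T"
proof -
  let ?X = "{card S |S. S \<subseteq> (\<lambda>j. u $ j) ` {..<n} \<and> indep_scalars F S}"
  have b: "\<forall>x\<in>?X. x \<le> card T"
  proof
    fix x assume "x \<in> ?X"
    then obtain S where S: "x = card S" "S \<subseteq> (\<lambda>j. u $ j) ` {..<n}" "indep_scalars F S" by auto
    have "\<forall>s\<in>S. \<exists>c. (\<forall>t\<in>T. c t \<in> F) \<and> s = (\<Sum>t\<in>T. c t * w t)"
      using S(2) sp by blast
    from scal_card_le[OF K S(3) fT this] S(1) show "x \<le> card T" by simp
  qed
  have "indep_scalars F {}" unfolding indep_scalars_def by auto
  hence "0 \<in> ?X" by force
  moreover have "?X \<subseteq> {..card T}" using b by (simp only: subset_iff atMost_iff) blast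
  hence "finite ?X" by (rule finite_subset) simp
  ultimately show ?thesis unfolding rank_weight_def using b by (intro Max.boundedI) blast+
qed

lemma rw_cong: "(\<And>j. j < n \<Longrightarrow> u $ j = v $ j) \<Longrightarrow> rank_weight F n u = rank_weight F n v"
proof -
  assume "\<And>j. j < n \<Longrightarrow> u $ j = v $ j"
  hence "(\<lambda>j. u $ j) ` {..<n} = (\<lambda>j. v $ j) ` {..<n}" by auto
  thus ?thesis unfolding rank_weight_def by simp
qed

lemma rw_bounded: "rank_weight F n u \<le> n"
proof -
  let ?X = "{card S |S. S \<subseteq> (\<lambda>j. u $ j) ` {..<n} \<and> indep_scalars F S}"
  have b: "\<forall>x\<in>?X. x \<le> n"
  proof
    fix x assume "x \<in> ?X"
    then obtain S where S: "x = card S" "S \<subseteq> (\<lambda>j. u $ j) ` {..<n}" by auto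
    then have "card S \<le> card ((\<lambda>j. u $ j) ` {..<n})" by (simp add: card_mono)
    also have "\<dots> \<le> n" using card_image_le[of "{..<n}" "\<lambda>j. u $ j"] by simp
    finally show "x \<le> n" using S by simp
  qed
  have "indep_scalars F {}" unfolding indep_scalars_def by auto
  hence "0 \<in> ?X" by force
  moreover have "?X \<subseteq> {..n}" using b by (simp only: subset_iff atMost_iff) blast
  hence "finite ?X" by (rule finite_subset) simp
  ultimately show ?thesis unfolding rank_weight_def using b by (intro Max.boundedI) blast+
qed

lemma hd_bounded: "hamming_dist n u v \<le> n"
  unfolding hamming_dist_def
  using card_mono[of "{..<n}" "{j. j < n \<and> u $ j \<noteq> v $ j}"] by auto

lemma card_split_n: "card {j. j < n \<and> P j} + card {j. j < n \<and> \<not> P j} = (n::nat)"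
proof -
  have "card {j. j < n \<and> P j} + card {j. j < n \<and> \<not> P j} = card ({j. j < n \<and> P j} \<union> {j. j < n \<and> \<not> P j})"
    by (rule card_Un_disjoint[symmetric]) auto
  also have "{j. j < n \<and> P j} \<union> {j. j < n \<and> \<not> P j} = {..<n}" by auto
  finally show ?thesis by simp
qed



lemma rs_mem: "G \<in> carrier_mat k n \<Longrightarrow> v \<in> row_space K G \<longleftrightarrow>
   (\<exists>x. v = vec n (\<lambda>j. \<Sum>i<k. x i * G $$ (i, j)) \<and> (\<forall>i<k. x i \<in> K))"
  unfolding row_space_def by auto

lemma rs_subspace:
  assumes K: "is_subfield K" and G: "G \<in> carrier_mat k n" and GK: "\<forall>i<k. \<forall>j<n. G $$ (i, j) \<in> K"
  shows "is_subspace K n (row_space K G)"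
  unfolding is_subspace_def
proof (intro conjI ballI)
  show "row_space K G \<subseteq> vecs_over K n"
  proof
    fix v assume "v \<in> row_space K G"
    then obtain x where x: "v = vec n (\<lambda>j. \<Sum>i<k. x i * G $$ (i, j))" "\<forall>i<k. x i \<in> K"
      using rs_mem[OF G] by blast
    show "v \<in> vecs_over K n" unfolding vecs_over_def x(1)
      using x(2) GK by (auto intro!: sf_sum sf_mult K)
  qed
  show "0\<^sub>v n \<in> row_space K G" unfolding rs_mem[OF G]
    by (intro exI[of _ "\<lambda>_. 0"]) (auto simp: sf_0 K)
next
  fix u v assume "u \<in> row_space K G" "v \<in> row_space K G"
  then obtain x y where x: "u = vec n (\<lambda>j. \<Sum>i<k. x i * G $$ (i, j))" "\<forall>i<k. x i \<in> K"
    and y: "v = vec n (\<lambda>j. \<Sum>i<k. y i * G $$ (i, j))" "\<forall>i<k. y i \<in> K"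
    unfolding rs_mem[OF G] by blast
  show "u + v \<in> row_space K G" unfolding rs_mem[OF G]
    by (intro exI[of _ "\<lambda>i. x i + y i"])
      (auto simp: x y sf_add K distrib_right sum.distrib intro!: eq_vecI)
next
  fix a u assume a: "a \<in> K" and "u \<in> row_space K G"
  then obtain x where x: "u = vec n (\<lambda>j. \<Sum>i<k. x i * G $$ (i, j))" "\<forall>i<k. x i \<in> K"
    using rs_mem[OF G] by blast
  show "a \<cdot>\<^sub>v u \<in> row_space K G" unfolding rs_mem[OF G]
    by (intro exI[of _ "\<lambda>i. a * x i"])
      (auto simp: x sf_mult K a sum_distrib_left mult.assoc intro!: eq_vecI)
qed

lemma delta_sum: "a < (k::nat) \<Longrightarrow> (\<Sum>i<k. (if i = a then 1 else 0) * (f i :: 'a::field)) = f a"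
proof -
  assume "a < k"
  have "(\<Sum>i<k. (if i = a then 1 else 0) * f i) = (\<Sum>i<k. if i = a then f i else 0)"
    by (rule sum.cong) auto
  also have "\<dots> = f a" using \<open>a < k\<close> by (subst sum.delta) auto
  finally show ?thesis .
qed

lemma rs_dim:
  assumes K: "is_subfield K" and G: "G \<in> carrier_mat k n" and GK: "\<forall>i<k. \<forall>j<n. G $$ (i, j) \<in> K"
    and ri: "\<forall>x. (\<forall>i<k. x i \<in> K) \<longrightarrow> (\<forall>j<n. (\<Sum>i<k. x i * G $$ (i, j)) = 0) \<longrightarrow> (\<forall>i<k. x i = 0)"
  shows "dim_over K n (row_space K G) = k"
proof -
  let ?X = "{card S |S. S \<subseteq> row_space K G \<and> indep_vecs K n S}"
  have up: "\<forall>c\<in>?X. c \<le> k"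
  proof
    fix c assume "c \<in> ?X"
    then obtain S where S: "c = card S" "S \<subseteq> row_space K G" "indep_vecs K n S" by auto
    have "\<forall>v\<in>S. \<exists>x. (\<forall>t\<in>{..<k}. x t \<in> K) \<and> (\<forall>j<n. v $ j = (\<Sum>t\<in>{..<k}. x t * G $$ (t, j)))"
    proof
      fix v assume "v \<in> S"
      then obtain x where x: "v = vec n (\<lambda>j. \<Sum>i<k. x i * G $$ (i, j))" "\<forall>i<k. x i \<in> K"
        using S(2) rs_mem[OF G] by blast
      then show "\<exists>x. (\<forall>t\<in>{..<k}. x t \<in> K) \<and> (\<forall>j<n. v $ j = (\<Sum>t\<in>{..<k}. x t * G $$ (t, j)))"
        by (intro exI[of _ x]) auto
    qed
    from vec_card_le[OF K S(3) _ this] S(1) show "c \<le> k" by simp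
  qed
  define S where "S = row G ` {..<k}"
  have rowj: "row G i $ j = G $$ (i, j)" if "i < k" "j < n" for i j using G that by auto
  have inj: "inj_on (row G) {..<k}"
  proof
    fix a b assume a: "a \<in> {..<k}" and b: "b \<in> {..<k}" and eq: "row G a = row G b"
    show "a = b"
    proof (rule ccontr)
      assume ab: "a \<noteq> b"
      define x where "x i = (if i = a then 1 else 0) - (if i = b then 1 else (0::'a))" for i
      have "\<forall>i<k. x i \<in> K" unfolding x_def by (auto intro!: sf_diff sf_0 sf_1 sf_uminus K)
      moreover have "\<forall>j<n. (\<Sum>i<k. x i * G $$ (i, j)) = 0"
      proof (intro allI impI)
        fix j assume j: "j < n"
        have "(\<Sum>i<k. x i * G $$ (i, j)) = (\<Sum>i<k. (if i = a then 1 else 0) * G $$ (i, j))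
            - (\<Sum>i<k. (if i = b then 1 else 0) * G $$ (i, j))"
          unfolding x_def by (simp add: left_diff_distrib sum_subtractf)
        also have "\<dots> = G $$ (a, j) - G $$ (b, j)" using a b by (simp add: delta_sum)
        also have "\<dots> = 0" using eq rowj[OF _ j] a b by (metis lessThan_iff right_minus_eq)
        finally show "(\<Sum>i<k. x i * G $$ (i, j)) = 0" .
      qed
      ultimately have "x a = 0" using ri a by blast
      then show False using ab unfolding x_def by simp
    qed
  qed
  have Ssub: "S \<subseteq> row_space K G"
  proof
    fix v assume "v \<in> S"
    then obtain i where i: "i < k" "v = row G i" unfolding S_def by auto
    show "v \<in> row_space K G" unfolding rs_mem[OF G]
      by (intro exI[of _ "\<lambda>i'. if i' = i then 1 else 0"])
        (use G in \<open>auto simp: i delta_sum sf_0 sf_1 K rowj intro!: eq_vecI\<close>)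
  qed
  have Sind: "indep_vecs K n S" unfolding indep_vecs_def
  proof (intro conjI allI impI ballI)
    show "finite S" unfolding S_def by simp
    fix c v assume cK: "\<forall>v\<in>S. c v \<in> K" and cs: "\<forall>j<n. (\<Sum>v\<in>S. c v * v $ j) = 0" and v: "v \<in> S"
    define x where "x i = c (row G i)" for i
    have "\<forall>i<k. x i \<in> K" using cK unfolding x_def S_def by auto
    moreover have "\<forall>j<n. (\<Sum>i<k. x i * G $$ (i, j)) = 0"
    proof (intro allI impI)
      fix j assume j: "j < n"
      have "(\<Sum>v\<in>S. c v * v $ j) = (\<Sum>i<k. c (row G i) * row G i $ j)"
        unfolding S_def by (simp add: sum.reindex[OF inj])
      also have "\<dots> = (\<Sum>i<k. x i * G $$ (i, j))" using rowj[OF _ j] x_def by (intro sum.cong) auto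
      finally show "(\<Sum>i<k. x i * G $$ (i, j)) = 0" using cs j by simp
    qed
    ultimately have "\<forall>i<k. x i = 0" using ri by blast
    then show "c v = 0" using v unfolding S_def x_def by auto
  qed
  have "card S = k" unfolding S_def using card_image[OF inj] by simp
  hence kX: "k \<in> ?X" using Ssub Sind by blast
  have "?X \<subseteq> {..k}" using up by (simp only: subset_iff atMost_iff) blast
  hence "finite ?X" by (rule finite_subset) simp
  then show ?thesis unfolding dim_over_def using up kX by (intro Max_eqI) blast+
qed

lemma rs_dim_conv:
  assumes K: "is_subfield K" and G: "G \<in> carrier_mat k n" and GK: "\<forall>i<k. \<forall>j<n. G $$ (i, j) \<in> K"
    and dim: "dim_over K n (row_space K G) = k"
  shows "\<forall>x. (\<forall>i<k. x i \<in> K) \<longrightarrow> (\<forall>j<n. (\<Sum>i<k. x i * G $$ (i, j)) = 0) \<longrightarrow> (\<forall>i<k. x i = 0)"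
proof (rule ccontr)
  assume "\<not> ?thesis"
  then obtain x p where xK: "\<forall>i<k. x i \<in> K" and x0: "\<forall>j<n. (\<Sum>i<k. x i * G $$ (i, j)) = 0"
    and p: "p < k" "x p \<noteq> 0" by blast
  define T where "T = {..<k} - {p}"
  have cT: "card T = k - 1" unfolding T_def using p by simp
  let ?X = "{card S |S. S \<subseteq> row_space K G \<and> indep_vecs K n S}"
  have up: "\<forall>c\<in>?X. c \<le> k - 1"
  proof
    fix c assume "c \<in> ?X"
    then obtain S where S: "c = card S" "S \<subseteq> row_space K G" "indep_vecs K n S" by auto
    have "\<forall>v\<in>S. \<exists>z. (\<forall>t\<in>T. z t \<in> K) \<and> (\<forall>j<n. v $ j = (\<Sum>t\<in>T. z t * G $$ (t, j)))"
    proof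
      fix v assume "v \<in> S"
      then obtain y where y: "v = vec n (\<lambda>j. \<Sum>i<k. y i * G $$ (i, j))" "\<forall>i<k. y i \<in> K"
        using S(2) rs_mem[OF G] by blast
      define z where "z i = y i - y p / x p * x i" for i
      have "\<forall>t\<in>T. z t \<in> K" unfolding z_def T_def using y(2) xK p
        by (auto intro!: sf_diff sf_mult sf_div K)
      moreover have "\<forall>j<n. v $ j = (\<Sum>t\<in>T. z t * G $$ (t, j))"
      proof (intro allI impI)
        fix j assume j: "j < n"
        have s1: "(\<Sum>i<k. y i * G $$ (i, j)) = y p * G $$ (p, j) + (\<Sum>i\<in>T. y i * G $$ (i, j))"
          unfolding T_def using p by (simp add: sum.remove)
        have s2: "0 = x p * G $$ (p, j) + (\<Sum>i\<in>T. x i * G $$ (i, j))"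
          using x0 j p unfolding T_def by (simp add: sum.remove)
        have "y p * G $$ (p, j) = y p / x p * (x p * G $$ (p, j))" using p by simp
        also have "\<dots> = - (\<Sum>i\<in>T. y p / x p * x i * G $$ (i, j))"
          using s2 by (simp add: eq_neg_iff_add_eq_0[symmetric] sum_distrib_left mult.assoc)
        finally have "v $ j = (\<Sum>i\<in>T. y i * G $$ (i, j)) - (\<Sum>i\<in>T. y p / x p * x i * G $$ (i, j))"
          using s1 y(1) j by simp
        also have "\<dots> = (\<Sum>t\<in>T. z t * G $$ (t, j))"
          unfolding z_def by (simp add: left_diff_distrib sum_subtractf)
        finally show "v $ j = (\<Sum>t\<in>T. z t * G $$ (t, j))" .
      qed
      ultimately show "\<exists>z. (\<forall>t\<in>T. z t \<in> K) \<and> (\<forall>j<n. v $ j = (\<Sum>t\<in>T. z t * G $$ (t, j)))"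
        by blast
    qed
    from vec_card_le[OF K S(3) _ this] S(1) cT show "c \<le> k - 1" unfolding T_def by simp
  qed
  have "indep_vecs K n {}" unfolding indep_vecs_def by auto
  hence ne: "0 \<in> ?X" by force
  have "?X \<subseteq> {..k-1}" using up by (simp only: subset_iff atMost_iff) blast
  hence "finite ?X" by (rule finite_subset) simp
  hence "dim_over K n (row_space K G) \<le> k - 1" unfolding dim_over_def using up ne
    by (intro Max.boundedI) blast+
  then show False using dim p by simp
qed



lemma hd_vec: "hamming_dist n (vec n f) (vec n g) = n - card {j. j < n \<and> f j - g j = 0}"
proof -
  have "hamming_dist n (vec n f) (vec n g) = card {j. j < n \<and> \<not> (f j - g j = 0)}"
    unfolding hamming_dist_def by (intro arg_cong[where f = card]) auto
  then show ?thesis using card_split_n[of n "\<lambda>j. f j - g j = 0"] by simp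
qed

lemma card_lt_n: "card {j. j < n \<and> P j} \<le> (n::nat)"
  using card_mono[of "{..<n}" "{j. j < n \<and> P j}"] by auto

lemma MDS_crit:
  assumes K: "is_subfield K" and G: "G \<in> carrier_mat k n" and GK: "\<forall>i<k. \<forall>j<n. G $$ (i, j) \<in> K"
    and k0: "0 < k" and kn: "k \<le> n"
    and H: "\<forall>x. (\<forall>i<k. x i \<in> K) \<longrightarrow> (\<exists>i<k. x i \<noteq> 0) \<longrightarrow>
              card {j. j < n \<and> (\<Sum>i<k. x i * G $$ (i, j)) = 0} < k"
  shows "is_MDS K n k (row_space K G)"
proof -
  have ri: "\<forall>x. (\<forall>i<k. x i \<in> K) \<longrightarrow> (\<forall>j<n. (\<Sum>i<k. x i * G $$ (i, j)) = 0) \<longrightarrow> (\<forall>i<k. x i = 0)"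
  proof (intro allI impI)
    fix x i assume xK: "\<forall>i<k. x i \<in> K" and z: "\<forall>j<n. (\<Sum>i<k. x i * G $$ (i, j)) = 0" and i: "i < k"
    show "x i = 0"
    proof (rule ccontr)
      assume "x i \<noteq> 0"
      with H xK i have "card {j. j < n \<and> (\<Sum>i<k. x i * G $$ (i, j)) = 0} < k" by blast
      moreover have "{j. j < n \<and> (\<Sum>i<k. x i * G $$ (i, j)) = 0} = {..<n}" using z by auto
      ultimately show False using kn by simp
    qed
  qed
  let ?C = "row_space K G"
  let ?D = "{hamming_dist n u v |u v. u \<in> ?C \<and> v \<in> ?C \<and> u \<noteq> v}"
  have low: "\<forall>d\<in>?D. n - k + 1 \<le> d"
  proof
    fix d assume "d \<in> ?D"
    then obtain u v where uv: "d = hamming_dist n u v" "u \<in> ?C" "v \<in> ?C" "u \<noteq> v" by blast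
    from uv(2) obtain x where x: "u = vec n (\<lambda>j. \<Sum>i<k. x i * G $$ (i, j))" "\<forall>i<k. x i \<in> K"
      unfolding rs_mem[OF G] by blast
    from uv(3) obtain y where y: "v = vec n (\<lambda>j. \<Sum>i<k. y i * G $$ (i, j))" "\<forall>i<k. y i \<in> K"
      unfolding rs_mem[OF G] by blast
    define z where "z i = x i - y i" for i
    have zK: "\<forall>i<k. z i \<in> K" using x y unfolding z_def by (auto intro: sf_diff K)
    have dif: "(\<Sum>i<k. x i * G $$ (i, j)) - (\<Sum>i<k. y i * G $$ (i, j)) = (\<Sum>i<k. z i * G $$ (i, j))" for j
      unfolding z_def by (simp add: left_diff_distrib sum_subtractf)
    have "\<exists>i<k. z i \<noteq> 0"
    proof (rule ccontr)
      assume "\<not> ?thesis"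
      then have "\<forall>i<k. x i = y i" unfolding z_def by auto
      then have "u = v" unfolding x y by (intro eq_vecI) auto
      then show False using uv by simp
    qed
    with H zK have "card {j. j < n \<and> (\<Sum>i<k. z i * G $$ (i, j)) = 0} < k" by blast
    moreover have "d = n - card {j. j < n \<and> (\<Sum>i<k. z i * G $$ (i, j)) = 0}"
      unfolding uv(1) x(1) y(1) hd_vec dif by simp
    ultimately show "n - k + 1 \<le> d" using card_lt_n kn by linarith
  qed
  have mem: "n - k + 1 \<in> ?D"
  proof -
    have "\<forall>i\<in>{..<k}. \<forall>j\<in>{..<k-1}. G $$ (i, j) \<in> K" using GK kn by auto
    from homog[OF K _ _ _ this] k0
    obtain x where x: "\<forall>i\<in>{..<k}. x i \<in> K" "\<exists>i\<in>{..<k}. x i \<noteq> 0"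
      "\<forall>j\<in>{..<k-1}. (\<Sum>i\<in>{..<k}. x i * G $$ (i, j)) = 0" by auto
    let ?Z = "{j. j < n \<and> (\<Sum>i<k. x i * G $$ (i, j)) = 0}"
    have "card ?Z < k" using H x by blast
    moreover have "{..<k-1} \<subseteq> ?Z" using x(3) kn by auto
    hence "k - 1 \<le> card ?Z" using card_mono[of ?Z "{..<k-1}"] by auto
    ultimately have cZ: "card ?Z = k - 1" by linarith
    define u where "u = vec n (\<lambda>j. \<Sum>i<k. x i * G $$ (i, j))"
    define v where "v = vec n (\<lambda>j. \<Sum>i<k. (\<lambda>_. 0) i * G $$ (i, j))"
    have uC: "u \<in> ?C" unfolding u_def rs_mem[OF G] using x(1) by blast
    have vC: "v \<in> ?C" unfolding v_def rs_mem[OF G] by (rule exI[of _ "\<lambda>_. 0"]) (auto simp: sf_0 K)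
    have hd: "hamming_dist n u v = n - k + 1" unfolding u_def v_def hd_vec using cZ k0 kn by simp
    have "u \<noteq> v"
    proof
      assume "u = v"
      then have "hamming_dist n u v = 0" unfolding hamming_dist_def by simp
      then show False using hd by simp
    qed
    then show ?thesis using uC vC hd by force
  qed
  have "?D \<subseteq> {..n}" using hd_bounded by blast
  hence "finite ?D" by (rule finite_subset) simp
  then have "min_hamming_dist n ?C = n - k + 1" unfolding min_hamming_dist_def
    using low mem by (intro Min_eqI) blast+
  then show ?thesis unfolding is_MDS_def
    using rs_subspace[OF K G GK] rs_dim[OF K G GK ri] by blast
qed

lemma MDS_extract:
  assumes K: "is_subfield K" and G: "G \<in> carrier_mat k n" and GK: "\<forall>i<k. \<forall>j<n. G $$ (i, j) \<in> K"
    and M: "is_MDS K n k (row_space K G)"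
  shows "\<forall>x. (\<forall>i<k. x i \<in> K) \<longrightarrow> (\<exists>i<k. x i \<noteq> 0) \<longrightarrow>
              card {j. j < n \<and> (\<Sum>i<k. x i * G $$ (i, j)) = 0} < k"
proof (intro allI impI)
  fix x assume xK: "\<forall>i<k. x i \<in> K" and nz: "\<exists>i<k. x i \<noteq> 0"
  have ri: "\<forall>x. (\<forall>i<k. x i \<in> K) \<longrightarrow> (\<forall>j<n. (\<Sum>i<k. x i * G $$ (i, j)) = 0) \<longrightarrow> (\<forall>i<k. x i = 0)"
    using rs_dim_conv[OF K G GK] M unfolding is_MDS_def by blast
  let ?C = "row_space K G"
  let ?D = "{hamming_dist n u v |u v. u \<in> ?C \<and> v \<in> ?C \<and> u \<noteq> v}"
  let ?Z = "{j. j < n \<and> (\<Sum>i<k. x i * G $$ (i, j)) = 0}"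
  define u where "u = vec n (\<lambda>j. \<Sum>i<k. x i * G $$ (i, j))"
  define v where "v = vec n (\<lambda>j. \<Sum>i<k. (\<lambda>_. 0) i * G $$ (i, j))"
  have uC: "u \<in> ?C" unfolding u_def rs_mem[OF G] using xK by blast
  have vC: "v \<in> ?C" unfolding v_def rs_mem[OF G] by (rule exI[of _ "\<lambda>_. 0"]) (auto simp: sf_0 K)
  have "u \<noteq> v"
  proof
    assume "u = v"
    then have "\<forall>j<n. (\<Sum>i<k. x i * G $$ (i, j)) = 0"
      unfolding u_def v_def by (metis (no_types, lifting) index_vec mult_zero_left sum.neutral)
    then show False using ri xK nz by blast
  qed
  then have "hamming_dist n u v \<in> ?D" using uC vC by blast
  moreover have "?D \<subseteq> {..n}" using hd_bounded by blast
  hence "finite ?D" by (rule finite_subset) simp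
  ultimately have "Min ?D \<le> hamming_dist n u v" by simp
  moreover have "Min ?D = n - k + 1" using M unfolding is_MDS_def min_hamming_dist_def by simp
  moreover have "hamming_dist n u v = n - card ?Z" unfolding u_def v_def hd_vec by simp
  ultimately show "card ?Z < k" using card_lt_n[of n] by linarith
qed



lemma mult_mat_idx: "A \<in> carrier_mat a s \<Longrightarrow> B \<in> carrier_mat s b \<Longrightarrow> i < a \<Longrightarrow> j < b \<Longrightarrow>
   (A * B) $$ (i, j) = (\<Sum>t<s. A $$ (i, t) * B $$ (t, j))"
  by (simp add: scalar_prod_def atLeast0LessThan)

lemma sq_inv:
  assumes K: "is_subfield K" and B: "B \<in> carrier_mat s s" and BK: "\<forall>i<s. \<forall>j<s. B $$ (i, j) \<in> K"
    and ri: "\<forall>y. (\<forall>i<s. y i \<in> K) \<longrightarrow> (\<forall>j<s. (\<Sum>i<s. y i * B $$ (i, j)) = 0) \<longrightarrow> (\<forall>i<s. y i = 0)"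
  shows "\<exists>D \<in> carrier_mat s s. (\<forall>i<s. \<forall>j<s. D $$ (i, j) \<in> K) \<and> D * B = 1\<^sub>m s \<and> B * D = 1\<^sub>m s"
proof -
  have ex: "\<exists>c. (\<forall>a<s. c a \<in> K) \<and> (\<forall>b<s. (\<Sum>a<s. c a * B $$ (a, b)) = (if j = b then 1 else 0))"
    if j: "j < s" for j
  proof -
    define A where "A a b = (if a < s then B $$ (a, b) else (if j = b then 1 else 0))" for a b
    have "\<forall>a\<in>{..<Suc s}. \<forall>b\<in>{..<s}. A a b \<in> K" unfolding A_def using BK by (auto simp: sf_0 sf_1 K)
    from homog[OF K _ _ _ this]
    obtain x where x: "\<forall>a\<in>{..<Suc s}. x a \<in> K" "\<exists>a\<in>{..<Suc s}. x a \<noteq> 0"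
      "\<forall>b\<in>{..<s}. (\<Sum>a\<in>{..<Suc s}. x a * A a b) = 0" by auto
    have sm: "(\<Sum>a\<in>{..<Suc s}. x a * A a b) = (\<Sum>a<s. x a * B $$ (a, b)) + x s * (if j = b then 1 else 0)" for b
      unfolding A_def by (simp add: lessThan_Suc)
    have xs: "x s \<noteq> 0"
    proof
      assume xs0: "x s = 0"
      have "\<forall>b<s. (\<Sum>a<s. x a * B $$ (a, b)) = 0" using x(3) sm xs0 by simp
      with ri x(1) have "\<forall>a<s. x a = 0" by auto
      with xs0 x(2) show False by (auto simp: less_Suc_eq)
    qed
    show ?thesis
    proof (intro exI[of _ "\<lambda>a. - x a / x s"] conjI allI impI)
      fix a assume "a < s" then show "- x a / x s \<in> K" using x(1) by (auto intro!: sf_div sf_uminus K)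
    next
      fix b assume b: "b < s"
      have "(\<Sum>a<s. - x a / x s * B $$ (a, b)) = - (\<Sum>a<s. x a * B $$ (a, b)) / x s"
        by (simp add: sum_divide_distrib sum_negf)
      also have "(\<Sum>a<s. x a * B $$ (a, b)) = - x s * (if j = b then 1 else 0)"
        using x(3) sm[of b] b by (simp add: eq_neg_iff_add_eq_0)
      finally show "(\<Sum>a<s. - x a / x s * B $$ (a, b)) = (if j = b then 1 else 0)" using xs by simp
    qed
  qed
  then obtain cf where cf: "\<forall>j\<in>{..<s}. (\<forall>a<s. cf j a \<in> K) \<and>
     (\<forall>b<s. (\<Sum>a<s. cf j a * B $$ (a, b)) = (if j = b then 1 else 0))"
    using bchoice[of "{..<s}"] by (metis lessThan_iff)
  define D where "D = mat s s (\<lambda>(j, a). cf j a)"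
  have D: "D \<in> carrier_mat s s" unfolding D_def by simp
  have DB: "D * B = 1\<^sub>m s"
  proof (rule eq_matI)
    fix i j assume "i < dim_row (1\<^sub>m s)" "j < dim_col (1\<^sub>m s)"
    then have ij: "i < s" "j < s" by auto
    have "(D * B) $$ (i, j) = (\<Sum>t<s. D $$ (i, t) * B $$ (t, j))" using mult_mat_idx[OF D B ij] .
    also have "\<dots> = (\<Sum>t<s. cf i t * B $$ (t, j))" unfolding D_def using ij by (intro sum.cong) auto
    also have "\<dots> = 1\<^sub>m s $$ (i, j)" using cf ij by auto
    finally show "(D * B) $$ (i, j) = 1\<^sub>m s $$ (i, j)" .
  qed (use D B in auto)
  have "B * D = 1\<^sub>m s" using mat_mult_left_right_inverse[OF D B DB] .
  moreover have "\<forall>i<s. \<forall>j<s. D $$ (i, j) \<in> K" unfolding D_def using cf by auto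
  ultimately show ?thesis using D DB by blast
qed

lemma pick_bij: "finite S \<Longrightarrow> bij_betw (pick S) {..<card S} S"
proof -
  assume fS: "finite S"
  have inj: "inj_on (pick S) {..<card S}"
  proof
    fix a b assume a: "a \<in> {..<card S}" and b: "b \<in> {..<card S}" and e: "pick S a = pick S b"
    show "a = b"
    proof (rule ccontr)
      assume "a \<noteq> b"
      then consider "a < b" | "b < a" by linarith
      then show False
        using pick_mono_le[of b S a] pick_mono_le[of a S b] a b e by (cases; auto)
    qed
  qed
  have sub: "pick S ` {..<card S} \<subseteq> S" using pick_in_set_le by auto
  have "card (pick S ` {..<card S}) = card S" using card_image[OF inj] by simp
  then have "pick S ` {..<card S} = S" using card_subset_eq[OF fS sub] by simp
  then show ?thesis using inj unfolding bij_betw_def by simp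
qed

lemma pick_interval: "g < b - a \<Longrightarrow> pick {a..<b} g = a + g"
proof -
  assume g: "g < b - a"
  let ?S = "{a..<(b::nat)}"
  have g': "g < card ?S" using g by simp
  have p: "pick ?S g \<in> ?S" using pick_in_set_le[OF g'] .
  have "card {x\<in>?S. x < pick ?S g} = g" using card_pick_le[OF g'] .
  moreover have "{x\<in>?S. x < pick ?S g} = {a..<pick ?S g}" using p by auto
  ultimately have "pick ?S g - a = g" using p by simp
  moreover have "a \<le> pick ?S g" using p by simp
  ultimately show ?thesis by linarith
qed

lemma sub_ri:
  assumes K: "is_subfield K" and G: "G \<in> carrier_mat s n"
    and H: "\<forall>x. (\<forall>i<s. x i \<in> K) \<longrightarrow> (\<exists>i<s. x i \<noteq> 0) \<longrightarrow>
              card {j. j < n \<and> (\<Sum>i<s. x i * G $$ (i, j)) = 0} < s"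
    and Z: "Z \<subseteq> {..<n}" "card Z = s"
  shows "\<forall>y. (\<forall>i<s. y i \<in> K) \<longrightarrow> (\<forall>g<s. (\<Sum>i<s. y i * G $$ (i, pick Z g)) = 0) \<longrightarrow> (\<forall>i<s. y i = 0)"
proof (intro allI impI)
  fix y i assume yK: "\<forall>i<s. y i \<in> K" and z: "\<forall>g<s. (\<Sum>i<s. y i * G $$ (i, pick Z g)) = 0" and i: "i < s"
  show "y i = 0"
  proof (rule ccontr)
    assume "y i \<noteq> 0"
    then have lt: "card {j. j < n \<and> (\<Sum>i<s. y i * G $$ (i, j)) = 0} < s" using H yK i by blast
    have fZ: "finite Z" using Z(1) finite_subset by blast
    have "Z \<subseteq> {j. j < n \<and> (\<Sum>i<s. y i * G $$ (i, j)) = 0}"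
    proof
      fix c assume c: "c \<in> Z"
      then obtain g where "g < s" "c = pick Z g" using pick_bij[OF fZ] Z(2)
        unfolding bij_betw_def by (metis imageE lessThan_iff)
      then show "c \<in> {j. j < n \<and> (\<Sum>i<s. y i * G $$ (i, j)) = 0}" using z c Z(1) by auto
    qed
    then have "s \<le> card {j. j < n \<and> (\<Sum>i<s. y i * G $$ (i, j)) = 0}"
      using card_mono[of "{j. j < n \<and> (\<Sum>i<s. y i * G $$ (i, j)) = 0}" Z] Z(2) by auto
    then show False using lt by simp
  qed
qed



lemma off_Suc: "block_off l r (Suc i) = block_off l r i + (l + r i)"
  unfolding block_off_def by simp

lemma off_mono: "i \<le> j \<Longrightarrow> block_off l r i \<le> block_off l r j"
  unfolding block_off_def by (intro sum_mono2) auto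

lemma off_n: "block_off l r m = (\<Sum>i<m. r i + l)"
  unfolding block_off_def by (simp add: add.commute)

lemma card_bc: "card (block_cols l r i) = l + r i"
  unfolding block_cols_def by simp

lemma bc_cover: "{..<block_off l r m} = (\<Union>i<m. block_cols l r i)"
proof (induction m)
  case 0 then show ?case by (simp add: block_off_def)
next
  case (Suc m)
  have "{..<block_off l r (Suc m)} = {..<block_off l r m} \<union> block_cols l r m"
    unfolding off_Suc block_cols_def by auto
  then show ?case using Suc by (simp add: lessThan_Suc Un_commute)
qed

lemma bc_sub: "i < m \<Longrightarrow> block_cols l r i \<subseteq> {..<block_off l r m}"
  using bc_cover by blast

lemma bc_disj: "i \<noteq> j \<Longrightarrow> block_cols l r i \<inter> block_cols l r j = {}"
proof -
  have *: "block_cols l r i \<inter> block_cols l r j = {}" if ij: "i < j" for i j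
  proof -
    have "block_off l r (Suc i) \<le> block_off l r j" using ij by (intro off_mono) simp
    then show ?thesis unfolding block_cols_def off_Suc by auto
  qed
  assume "i \<noteq> j"
  then consider "i < j" | "j < i" by linarith
  then show ?thesis using *[of i j] *[of j i] by (cases; auto)
qed

lemma bc_unique: "c \<in> block_cols l r i \<Longrightarrow> c \<in> block_cols l r j \<Longrightarrow> i = j"
  using bc_disj by blast

lemma sum_group: fixes f :: "nat \<Rightarrow> 'a::comm_monoid_add" and m l :: nat
  shows "(\<Sum>a<m * l. f a) = (\<Sum>i<m. \<Sum>b<l. f (i * l + b))"
proof -
  have "(\<Sum>a<m * l. f a) = (\<Sum>i<m. sum f {i * l..<i * l + l})"
    using sum.nat_group[of f l m] by simp
  also have "\<dots> = (\<Sum>i<m. \<Sum>b<l. f (i * l + b))"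
  proof (rule sum.cong)
    fix i show "sum f {i * l..<i * l + l} = (\<Sum>b<l. f (i * l + b))"
      by (subst sum.atLeastLessThan_shift_0) (simp add: atLeast0LessThan comp_def)
  qed simp
  finally show ?thesis .
qed

lemma bd_carrier: "block_diag m l r Ms \<in> carrier_mat (m * l) (block_off l r m)"
  unfolding block_diag_def block_off_def by simp

lemma bd_idx: "a < m * l \<Longrightarrow> c < block_off l r m \<Longrightarrow> block_diag m l r Ms $$ (a, c) =
  (if a div l < m \<and> c \<in> block_cols l r (a div l)
   then Ms (a div l) $$ (a mod l, c - block_off l r (a div l)) else 0)"
  unfolding block_diag_def block_off_def by simp

lemma bd_block:
  fixes u :: "nat \<Rightarrow> 'a::field"
  assumes l: "0 < l" and i: "i < m" and c: "c \<in> block_cols l r i"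
  shows "(\<Sum>a<m * l. u a * block_diag m l r Ms $$ (a, c)) =
         (\<Sum>b<l. u (i * l + b) * Ms i $$ (b, c - block_off l r i))"
proof -
  have cn: "c < block_off l r m" using bc_sub[OF i] c by blast
  have "(\<Sum>a<m * l. u a * block_diag m l r Ms $$ (a, c)) =
        (\<Sum>i'<m. \<Sum>b<l. u (i' * l + b) * block_diag m l r Ms $$ (i' * l + b, c))"
    by (rule sum_group)
  also have "\<dots> = (\<Sum>i'<m. if i' = i then (\<Sum>b<l. u (i * l + b) * Ms i $$ (b, c - block_off l r i)) else 0)"
  proof (rule sum.cong)
    fix i' assume i': "i' \<in> {..<m}"
    have idx: "i' * l + b < m * l" if "b < l" for b
    proof -
      have "i' * l + b < i' * l + l" using that by simp
      also have "\<dots> = Suc i' * l" by simp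
      also have "\<dots> \<le> m * l" using i' by (intro mult_le_mono1) simp
      finally show ?thesis .
    qed
    have dm: "(i' * l + b) div l = i'" "(i' * l + b) mod l = b" if "b < l" for b
      using that l by simp_all
    show "(\<Sum>b<l. u (i' * l + b) * block_diag m l r Ms $$ (i' * l + b, c)) =
      (if i' = i then (\<Sum>b<l. u (i * l + b) * Ms i $$ (b, c - block_off l r i)) else 0)"
    proof (cases "i' = i")
      case True
      then show ?thesis using bd_idx[where Ms=Ms, OF idx cn] dm i c by (auto intro!: sum.cong)
    next
      case False
      then have "c \<notin> block_cols l r i'" using bc_unique c by blast
      then show ?thesis using bd_idx[where Ms=Ms, OF idx cn] dm False by (auto intro!: sum.neutral)
    qed
  qed simp
  also have "\<dots> = (\<Sum>b<l. u (i * l + b) * Ms i $$ (b, c - block_off l r i))"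
    using i by simp
  finally show ?thesis .
qed

lemma bij_card_filter: "bij_betw f A B \<Longrightarrow> card {a \<in> A. P (f a)} = card {b \<in> B. P b}"
proof -
  assume b: "bij_betw f A B"
  have "f ` {a \<in> A. P (f a)} = {b \<in> B. P b}" using b unfolding bij_betw_def by auto
  moreover have "inj_on f {a \<in> A. P (f a)}" using b unfolding bij_betw_def by (auto intro: inj_on_subset)
  ultimately show ?thesis using card_image by fastforce
qed



locale pmds =
  fixes F :: "'a::field set" and m l k :: nat and r :: "nat \<Rightarrow> nat"
    and Gt :: "'a mat" and Ms :: "nat \<Rightarrow> 'a mat"
  assumes F_sub: "is_subfield F" and m0: "m > 0" and l0: "l > 0" and k0: "k > 0"
    and lk: "l \<le> k" and kml: "k \<le> m * l"
    and Gt_gen: "Gt \<in> carrier_mat k (m * l)"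
    and Gt_MRD: "is_MRD F (m * l) k (row_space UNIV Gt)"
    and Ms_car: "\<forall>i<m. Ms i \<in> carrier_mat l (l + r i)"
    and Ms_F: "\<forall>i<m. \<forall>a<l. \<forall>b<l + r i. Ms i $$ (a, b) \<in> F"
    and Ms_MDS: "\<forall>i<m. is_MDS F (l + r i) l (row_space F (Ms i))"
begin

definition uu where "uu x a = (\<Sum>i<k. x i * Gt $$ (i, a))"

lemma Gt_ri: "\<forall>x. (\<forall>i<k. x i \<in> UNIV) \<longrightarrow> (\<forall>j<m * l. (\<Sum>i<k. x i * Gt $$ (i, j)) = 0) \<longrightarrow> (\<forall>i<k. x i = 0)"
  using rs_dim_conv[OF sf_UNIV Gt_gen] Gt_MRD unfolding is_MRD_def by blast

lemma Gt_rw: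
  fixes x :: "nat \<Rightarrow> 'a"
  assumes nz: "\<exists>i<k. x i \<noteq> 0"
  shows "m * l - k + 1 \<le> rank_weight F (m * l) (vec (m * l) (uu x))"
proof -
  let ?C = "row_space UNIV Gt"
  let ?D = "{rank_dist F (m * l) u v |u v. u \<in> ?C \<and> v \<in> ?C \<and> u \<noteq> v}"
  define u where "u = vec (m * l) (\<lambda>j. \<Sum>i<k. x i * Gt $$ (i, j))"
  define v where "v = vec (m * l) (\<lambda>j. \<Sum>i<k. (\<lambda>_. 0) i * Gt $$ (i, j))"
  have uC: "u \<in> ?C" unfolding u_def rs_mem[OF Gt_gen] by blast
  have vC: "v \<in> ?C" unfolding v_def rs_mem[OF Gt_gen] by (rule exI[of _ "\<lambda>_. 0"]) auto
  have "u \<noteq> v"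
  proof
    assume "u = v"
    then have "\<forall>j<m * l. (\<Sum>i<k. x i * Gt $$ (i, j)) = 0"
      unfolding u_def v_def by (metis (no_types, lifting) index_vec mult_zero_left sum.neutral)
    then show False using Gt_ri nz by blast
  qed
  then have "rank_dist F (m * l) u v \<in> ?D" using uC vC by blast
  moreover have "?D \<subseteq> {..m * l}" using rw_bounded unfolding rank_dist_def by blast
  hence "finite ?D" by (rule finite_subset) simp
  ultimately have "Min ?D \<le> rank_dist F (m * l) u v" by simp
  moreover have "Min ?D = m * l - k + 1" using Gt_MRD unfolding is_MRD_def min_rank_dist_def by simp
  moreover have "rank_dist F (m * l) u v = rank_weight F (m * l) (vec (m * l) (uu x))"
    unfolding rank_dist_def by (rule rw_cong) (simp add: u_def v_def uu_def)
  ultimately show ?thesis by simp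
qed

lemma Gt_H: "\<forall>x :: nat \<Rightarrow> 'a. (\<exists>i<k. x i \<noteq> 0) \<longrightarrow> card {a. a < m * l \<and> uu x a = 0} < k"
proof (intro allI impI)
  fix x :: "nat \<Rightarrow> 'a" assume nz: "\<exists>i<k. x i \<noteq> 0"
  define T where "T = {a. a < m * l \<and> \<not> uu x a = 0}"
  have fT: "finite T" unfolding T_def by simp
  have "\<forall>a<m * l. \<exists>c. (\<forall>t\<in>T. c t \<in> F) \<and> vec (m * l) (uu x) $ a = (\<Sum>t\<in>T. c t * uu x t)"
  proof (intro allI impI)
    fix a assume a: "a < m * l"
    show "\<exists>c. (\<forall>t\<in>T. c t \<in> F) \<and> vec (m * l) (uu x) $ a = (\<Sum>t\<in>T. c t * uu x t)"
    proof (cases "a \<in> T")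
      case True
      have "(\<Sum>t\<in>T. (if t = a then 1 else 0) * uu x t) = (\<Sum>t\<in>T. if t = a then uu x t else 0)"
        by (rule sum.cong) auto
      also have "\<dots> = uu x a" using True fT by simp
      finally show ?thesis using a
        by (intro exI[of _ "\<lambda>t. if t = a then 1 else 0"]) (auto simp: sf_0 sf_1 F_sub)
    next
      case False
      then show ?thesis using a unfolding T_def
        by (intro exI[of _ "\<lambda>_. 0"]) (auto simp: sf_0 F_sub)
    qed
  qed
  from rw_le[OF F_sub fT this] have "rank_weight F (m * l) (vec (m * l) (uu x)) \<le> card T" .
  moreover have "card {a. a < m * l \<and> uu x a = 0} + card T = m * l"
    unfolding T_def by (rule card_split_n)
  ultimately show "card {a. a < m * l \<and> uu x a = 0} < k" using Gt_rw[OF nz] kml by linarith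
qed

lemma Ms_HF: "i < m \<Longrightarrow> \<forall>y. (\<forall>b<l. y b \<in> F) \<longrightarrow> (\<exists>b<l. y b \<noteq> 0) \<longrightarrow>
   card {j. j < l + r i \<and> (\<Sum>b<l. y b * Ms i $$ (b, j)) = 0} < l"
  using MDS_extract[OF F_sub, of "Ms i" l "l + r i"] Ms_car Ms_F Ms_MDS by blast

lemma Ms_inv:
  assumes i: "i < m" and Z: "Z \<subseteq> {..<l + r i}" "card Z = l"
  shows "\<exists>D \<in> carrier_mat l l. (\<forall>a<l. \<forall>b<l. D $$ (a, b) \<in> F) \<and>
     D * mat l l (\<lambda>(a, g). Ms i $$ (a, pick Z g)) = 1\<^sub>m l \<and>
     mat l l (\<lambda>(a, g). Ms i $$ (a, pick Z g)) * D = 1\<^sub>m l"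
proof -
  let ?B = "mat l l (\<lambda>(a, g). Ms i $$ (a, pick Z g))"
  have pz: "pick Z g < l + r i" if "g < l" for g
    using pick_in_set_le[of g Z] that Z by auto
  have B: "?B \<in> carrier_mat l l" by simp
  have BK: "\<forall>a<l. \<forall>b<l. ?B $$ (a, b) \<in> F" using Ms_F i pz by auto
  have ri0: "\<forall>y. (\<forall>a<l. y a \<in> F) \<longrightarrow> (\<forall>g<l. (\<Sum>a<l. y a * Ms i $$ (a, pick Z g)) = 0) \<longrightarrow> (\<forall>a<l. y a = 0)"
    using sub_ri[OF F_sub _ Ms_HF[OF i] Z] Ms_car i by blast
  have "\<forall>y. (\<forall>a<l. y a \<in> F) \<longrightarrow> (\<forall>g<l. (\<Sum>a<l. y a * ?B $$ (a, g)) = 0) \<longrightarrow> (\<forall>a<l. y a = 0)"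
  proof (intro allI impI)
    fix y a assume yK: "\<forall>a<l. y a \<in> F" and z: "\<forall>g<l. (\<Sum>a<l. y a * ?B $$ (a, g)) = 0" and a: "a < l"
    have "\<forall>g<l. (\<Sum>a<l. y a * Ms i $$ (a, pick Z g)) = 0"
    proof (intro allI impI)
      fix g assume g: "g < l"
      have "(\<Sum>a<l. y a * Ms i $$ (a, pick Z g)) = (\<Sum>a<l. y a * ?B $$ (a, g))"
        using g by (intro sum.cong) auto
      then show "(\<Sum>a<l. y a * Ms i $$ (a, pick Z g)) = 0" using z g by simp
    qed
    then show "y a = 0" using ri0 yK a by blast
  qed
  from sq_inv[OF F_sub B BK this] show ?thesis .
qed

lemma Ms_HU:
  assumes i: "i < m"
  shows "\<forall>y :: nat \<Rightarrow> 'a. (\<forall>b<l. y b \<in> UNIV) \<longrightarrow> (\<exists>b<l. y b \<noteq> 0) \<longrightarrow>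
    card {j. j < l + r i \<and> (\<Sum>b<l. y b * Ms i $$ (b, j)) = 0} < l"
proof (intro allI impI)
  fix y :: "nat \<Rightarrow> 'a" assume nz: "\<exists>b<l. y b \<noteq> 0"
  let ?Zs = "{j. j < l + r i \<and> (\<Sum>b<l. y b * Ms i $$ (b, j)) = 0}"
  show "card ?Zs < l"
  proof (rule ccontr)
    assume "\<not> ?thesis"
    then have "l \<le> card ?Zs" by simp
    then obtain Z where Z: "Z \<subseteq> ?Zs" "card Z = l" "finite Z"
      using obtain_subset_with_card_n[of l ?Zs] by blast
    have Zsub: "Z \<subseteq> {..<l + r i}" using Z(1) by auto
    let ?B = "mat l l (\<lambda>(a, g). Ms i $$ (a, pick Z g))"
    from Ms_inv[OF i Zsub Z(2)] obtain D where D: "D \<in> carrier_mat l l" "?B * D = 1\<^sub>m l" by blast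
    have zero: "(\<Sum>b<l. y b * ?B $$ (b, g)) = 0" if g: "g < l" for g
    proof -
      have "pick Z g \<in> Z" using pick_in_set_le[of g Z] g Z(2) by simp
      then have "(\<Sum>b<l. y b * Ms i $$ (b, pick Z g)) = 0" using Z(1) by auto
      moreover have "(\<Sum>b<l. y b * ?B $$ (b, g)) = (\<Sum>b<l. y b * Ms i $$ (b, pick Z g))"
        using g by (intro sum.cong) auto
      ultimately show ?thesis by simp
    qed
    have "y a = 0" if a: "a < l" for a
    proof -
      have "y a = (\<Sum>b<l. y b * (1\<^sub>m l) $$ (b, a))"
        using a by (simp add: if_distrib cong: if_cong)
      also have "\<dots> = (\<Sum>b<l. y b * (\<Sum>g<l. ?B $$ (b, g) * D $$ (g, a)))"
        unfolding D(2)[symmetric] using a mult_mat_idx[of ?B l l D l] D(1) by (intro sum.cong) auto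
      also have "\<dots> = (\<Sum>b<l. \<Sum>g<l. y b * ?B $$ (b, g) * D $$ (g, a))"
        by (simp add: sum_distrib_left mult.assoc)
      also have "\<dots> = (\<Sum>g<l. \<Sum>b<l. y b * ?B $$ (b, g) * D $$ (g, a))"
        by (rule sum.swap)
      also have "\<dots> = (\<Sum>g<l. (\<Sum>b<l. y b * ?B $$ (b, g)) * D $$ (g, a))"
        by (simp add: sum_distrib_right)
      also have "\<dots> = 0" using zero by simp
      finally show ?thesis .
    qed
    then show False using nz by blast
  qed
qed

lemma Ms_MDS_U: "i < m \<Longrightarrow> is_MDS UNIV (l + r i) l (row_space UNIV (Ms i))"
  using MDS_crit[OF sf_UNIV, of "Ms i" l "l + r i"] Ms_car Ms_HU l0 by auto

end



context pmds begin

abbreviation "nn \<equiv> block_off l r m"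
abbreviation "BD \<equiv> block_diag m l r Ms"
definition wf where "wf x c = (\<Sum>a<m * l. uu x a * BD $$ (a, c))"

lemma exch: "c < nn \<Longrightarrow> (\<Sum>i<k. x i * (Gt * BD) $$ (i, c)) = wf x c"
proof -
  assume c: "c < nn"
  have "(\<Sum>i<k. x i * (Gt * BD) $$ (i, c)) = (\<Sum>i<k. x i * (\<Sum>a<m * l. Gt $$ (i, a) * BD $$ (a, c)))"
    using mult_mat_idx[OF Gt_gen bd_carrier _ c] by (intro sum.cong) auto
  also have "\<dots> = (\<Sum>i<k. \<Sum>a<m * l. x i * Gt $$ (i, a) * BD $$ (a, c))"
    by (simp add: sum_distrib_left mult.assoc)
  also have "\<dots> = (\<Sum>a<m * l. \<Sum>i<k. x i * Gt $$ (i, a) * BD $$ (a, c))"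
    by (rule sum.swap)
  also have "\<dots> = wf x c" unfolding wf_def uu_def by (simp add: sum_distrib_right)
  finally show ?thesis .
qed

lemma wf_block: "i < m \<Longrightarrow> c \<in> block_cols l r i \<Longrightarrow>
  wf x c = (\<Sum>b<l. uu x (i * l + b) * Ms i $$ (b, c - block_off l r i))"
  unfolding wf_def by (rule bd_block[OF l0])

lemma Gt_HG: "\<forall>x. (\<forall>i<k. x i \<in> UNIV) \<longrightarrow> (\<exists>i<k. x i \<noteq> 0) \<longrightarrow>
   card {j. j < m * l \<and> (\<Sum>i<k. x i * Gt $$ (i, j)) = 0} < k"
  using Gt_H unfolding uu_def by blast

lemma Gt_inv:
  assumes J: "J \<subseteq> {..<m * l}" "card J = k"
  shows "\<exists>D \<in> carrier_mat k k. D * mat k k (\<lambda>(a, g). Gt $$ (a, pick J g)) = 1\<^sub>m k"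
proof -
  let ?B = "mat k k (\<lambda>(a, g). Gt $$ (a, pick J g))"
  have B: "?B \<in> carrier_mat k k" by simp
  have BK: "\<forall>a<k. \<forall>b<k. ?B $$ (a, b) \<in> UNIV" by simp
  have ri0: "\<forall>y. (\<forall>a<k. y a \<in> UNIV) \<longrightarrow> (\<forall>g<k. (\<Sum>a<k. y a * Gt $$ (a, pick J g)) = 0) \<longrightarrow> (\<forall>a<k. y a = 0)"
    using sub_ri[OF sf_UNIV Gt_gen Gt_HG J] by blast
  have "\<forall>y. (\<forall>a<k. y a \<in> UNIV) \<longrightarrow> (\<forall>g<k. (\<Sum>a<k. y a * ?B $$ (a, g)) = 0) \<longrightarrow> (\<forall>a<k. y a = 0)"
  proof (intro allI impI)
    fix y a assume z: "\<forall>g<k. (\<Sum>a<k. y a * ?B $$ (a, g)) = 0" and a: "a < k"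
    have "\<forall>g<k. (\<Sum>a<k. y a * Gt $$ (a, pick J g)) = 0"
    proof (intro allI impI)
      fix g assume g: "g < k"
      have "(\<Sum>a<k. y a * Gt $$ (a, pick J g)) = (\<Sum>a<k. y a * ?B $$ (a, g))"
        using g by (intro sum.cong) auto
      then show "(\<Sum>a<k. y a * Gt $$ (a, pick J g)) = 0" using z g by simp
    qed
    then show "y a = 0" using ri0 a by blast
  qed
  from sq_inv[OF sf_UNIV B BK this] show ?thesis by blast
qed

lemma surj_block:
  assumes i: "i < m"
  shows "\<exists>x. \<forall>b<l. uu x (i * l + b) = y b"
proof -
  define I0 where "I0 = {i * l..<i * l + l}"
  have il: "i * l + l \<le> m * l"
  proof -
    have "i * l + l = Suc i * l" by simp
    also have "\<dots> \<le> m * l" using i by (intro mult_le_mono1) simp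
    finally show ?thesis .
  qed
  have I0s: "I0 \<subseteq> {..<m * l}" unfolding I0_def using il by auto
  have cI0: "card I0 = l" unfolding I0_def by simp
  have "card ({..<m * l} - I0) = m * l - l" using I0s cI0 by (simp add: card_Diff_subset finite_subset)
  then have "k - l \<le> card ({..<m * l} - I0)" using kml by simp
  then obtain R where R: "R \<subseteq> {..<m * l} - I0" "card R = k - l" "finite R"
    using obtain_subset_with_card_n by blast
  define J where "J = I0 \<union> R"
  have Js: "J \<subseteq> {..<m * l}" unfolding J_def using I0s R by auto
  have cJ: "card J = k" unfolding J_def using R cI0 lk
    by (subst card_Un_disjoint) (auto simp: I0_def)
  have fJ: "finite J" using Js finite_subset by blast
  let ?B = "mat k k (\<lambda>(a, g). Gt $$ (a, pick J g))"
  from Gt_inv[OF Js cJ] obtain D where D: "D \<in> carrier_mat k k" "D * ?B = 1\<^sub>m k" by blast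
  define t where "t g = (if pick J g \<in> I0 then y (pick J g - i * l) else 0)" for g
  define x where "x a = (\<Sum>g<k. t g * D $$ (g, a))" for a
  show ?thesis
  proof (intro exI[of _ x] allI impI)
    fix b assume b: "b < l"
    have cJ': "i * l + b \<in> J" unfolding J_def I0_def using b by auto
    then obtain g' where g': "g' < k" "pick J g' = i * l + b"
      using pick_bij[OF fJ] cJ unfolding bij_betw_def by (metis imageE lessThan_iff)
    have "uu x (i * l + b) = (\<Sum>a<k. (\<Sum>g<k. t g * D $$ (g, a)) * ?B $$ (a, g'))"
      unfolding uu_def x_def using g' by (intro sum.cong) auto
    also have "\<dots> = (\<Sum>a<k. \<Sum>g<k. t g * (D $$ (g, a) * ?B $$ (a, g')))"
      by (simp add: sum_distrib_right mult.assoc)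
    also have "\<dots> = (\<Sum>g<k. \<Sum>a<k. t g * (D $$ (g, a) * ?B $$ (a, g')))"
      by (rule sum.swap)
    also have "\<dots> = (\<Sum>g<k. t g * (if g = g' then 1 else 0))"
    proof (rule sum.cong)
      fix g assume g: "g \<in> {..<k}"
      have "(D * ?B) $$ (g, g') = (\<Sum>a<k. D $$ (g, a) * ?B $$ (a, g'))"
        by (rule mult_mat_idx[OF D(1) _ _ g'(1)]) (use g in auto)
      then have mm: "(\<Sum>a<k. D $$ (g, a) * ?B $$ (a, g')) = (if g = g' then 1 else 0)"
        using D(2) g g' by simp
      have "(\<Sum>a<k. t g * (D $$ (g, a) * ?B $$ (a, g'))) = t g * (\<Sum>a<k. D $$ (g, a) * ?B $$ (a, g'))"
        by (simp only: sum_distrib_left)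
      then show "(\<Sum>a<k. t g * (D $$ (g, a) * ?B $$ (a, g'))) = t g * (if g = g' then 1 else 0)"
        using mm by simp
    qed simp
    also have "\<dots> = t g'" using g' by (simp add: if_distrib cong: if_cong)
    also have "\<dots> = y b" unfolding t_def g' I0_def using b by simp
    finally show "uu x (i * l + b) = y b" .
  qed
qed

end



context pmds begin

lemma keep_card:
  assumes Ks: "Keep \<subseteq> {..<nn}" and Kc: "\<forall>i<m. card (Keep \<inter> block_cols l r i) = l"
  shows "card Keep = m * l"
proof -
  have "Keep = (\<Union>i<m. Keep \<inter> block_cols l r i)" using Ks bc_cover[of l r m] by blast
  then have "card Keep = card (\<Union>i\<in>{..<m}. Keep \<inter> block_cols l r i)" by simp
  also have "\<dots> = (\<Sum>i<m. card (Keep \<inter> block_cols l r i))"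
  proof (rule card_UN_disjoint)
    show "\<forall>i\<in>{..<m}. finite (Keep \<inter> block_cols l r i)" by (simp add: block_cols_def)
    show "\<forall>i\<in>{..<m}. \<forall>j\<in>{..<m}. i \<noteq> j \<longrightarrow>
      Keep \<inter> block_cols l r i \<inter> (Keep \<inter> block_cols l r j) = {}" using bc_unique by blast
  qed simp
  also have "\<dots> = m * l" using Kc by simp
  finally show ?thesis .
qed

lemma coeff:
  fixes x :: "nat \<Rightarrow> 'a"
  assumes Ks: "Keep \<subseteq> {..<nn}" and Kc: "\<forall>i<m. card (Keep \<inter> block_cols l r i) = l"
    and a: "a < m * l"
  shows "\<exists>d. (\<forall>t\<in>Keep. d t \<in> F) \<and> uu x a = (\<Sum>t\<in>Keep. d t * wf x t)"
proof -
  define i where "i = a div l"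
  define \<alpha> where "\<alpha> = a mod l"
  have i: "i < m" unfolding i_def using a l0 by (simp add: less_mult_imp_div_less)
  have al: "\<alpha> < l" unfolding \<alpha>_def using l0 by simp
  have aeq: "a = i * l + \<alpha>" unfolding i_def \<alpha>_def by simp
  define S where "S = Keep \<inter> block_cols l r i"
  define off where "off = block_off l r i"
  have Sge: "\<forall>c\<in>S. off \<le> c \<and> c < off + (l + r i)" unfolding S_def off_def block_cols_def by auto
  have fS: "finite S" unfolding S_def block_cols_def by simp
  have cS: "card S = l" unfolding S_def using Kc i by simp
  define Zi where "Zi = (\<lambda>c. c - off) ` S"
  have injS: "inj_on (\<lambda>c. c - off) S"
  proof (rule inj_onI)
    fix c c' assume c: "c \<in> S" and c': "c' \<in> S" and e: "c - off = c' - off"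
    have "off \<le> c" "off \<le> c'" using Sge c c' by auto
    then show "c = c'" using e by linarith
  qed
  have cZ: "card Zi = l" unfolding Zi_def using card_image[OF injS] cS by simp
  have Zs: "Zi \<subseteq> {..<l + r i}" unfolding Zi_def using Sge by auto
  have fZ: "finite Zi" unfolding Zi_def using fS by simp
  let ?B = "mat l l (\<lambda>(b, g). Ms i $$ (b, pick Zi g))"
  from Ms_inv[OF i Zs cZ] obtain D where D: "D \<in> carrier_mat l l" "\<forall>a<l. \<forall>b<l. D $$ (a, b) \<in> F"
    "?B * D = 1\<^sub>m l" by blast
  define \<phi> where "\<phi> g = off + pick Zi g" for g
  have b1: "bij_betw (pick Zi) {..<l} Zi" using pick_bij[OF fZ] cZ by simp
  have b2: "bij_betw (\<lambda>z. off + z) Zi S"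
    unfolding bij_betw_def
  proof
    show "inj_on (\<lambda>z. off + z) Zi" by (intro inj_onI) simp
    have "(\<lambda>z. off + z) ` Zi = (\<lambda>c. off + (c - off)) ` S" unfolding Zi_def by (simp add: image_image)
    also have "\<dots> = (\<lambda>c. c) ` S" using Sge by (intro image_cong) auto
    also have "\<dots> = S" by simp
    finally show "(\<lambda>z. off + z) ` Zi = S" .
  qed
  have bphi: "bij_betw \<phi> {..<l} S" using bij_betw_trans[OF b1 b2] unfolding \<phi>_def comp_def .
  have phiS: "\<phi> g \<in> S" if "g < l" for g using bphi that unfolding bij_betw_def by auto
  have wphi: "wf x (\<phi> g) = (\<Sum>b<l. uu x (i * l + b) * ?B $$ (b, g))" if g: "g < l" for g
  proof -
    have "\<phi> g \<in> block_cols l r i" using phiS[OF g] unfolding S_def by simp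
    from wf_block[OF i this, of x]
    have "wf x (\<phi> g) = (\<Sum>b<l. uu x (i * l + b) * Ms i $$ (b, pick Zi g))"
      unfolding \<phi>_def off_def by simp
    also have "\<dots> = (\<Sum>b<l. uu x (i * l + b) * ?B $$ (b, g))" using g by (intro sum.cong) auto
    finally show ?thesis .
  qed
  have key: "uu x a = (\<Sum>g<l. D $$ (g, \<alpha>) * wf x (\<phi> g))"
  proof -
    have "(\<Sum>g<l. D $$ (g, \<alpha>) * wf x (\<phi> g)) = (\<Sum>g<l. D $$ (g, \<alpha>) * (\<Sum>b<l. uu x (i * l + b) * ?B $$ (b, g)))"
      using wphi by simp
    also have "\<dots> = (\<Sum>g<l. \<Sum>b<l. uu x (i * l + b) * (?B $$ (b, g) * D $$ (g, \<alpha>)))"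
      by (simp add: sum_distrib_left mult_ac)
    also have "\<dots> = (\<Sum>b<l. \<Sum>g<l. uu x (i * l + b) * (?B $$ (b, g) * D $$ (g, \<alpha>)))"
      by (rule sum.swap)
    also have "\<dots> = (\<Sum>b<l. uu x (i * l + b) * (if b = \<alpha> then 1 else 0))"
    proof (rule sum.cong)
      fix b assume b: "b \<in> {..<l}"
      have "(?B * D) $$ (b, \<alpha>) = (\<Sum>g<l. ?B $$ (b, g) * D $$ (g, \<alpha>))"
        by (rule mult_mat_idx[OF _ D(1) _ al]) (use b in auto)
      then have mm: "(\<Sum>g<l. ?B $$ (b, g) * D $$ (g, \<alpha>)) = (if b = \<alpha> then 1 else 0)"
        using D(3) b al by simp
      have "(\<Sum>g<l. uu x (i * l + b) * (?B $$ (b, g) * D $$ (g, \<alpha>))) =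
          uu x (i * l + b) * (\<Sum>g<l. ?B $$ (b, g) * D $$ (g, \<alpha>))"
        by (simp only: sum_distrib_left)
      then show "(\<Sum>g<l. uu x (i * l + b) * (?B $$ (b, g) * D $$ (g, \<alpha>))) =
          uu x (i * l + b) * (if b = \<alpha> then 1 else 0)" using mm by simp
    qed simp
    also have "\<dots> = uu x a" using al aeq by (simp add: if_distrib cong: if_cong)
    finally show ?thesis by simp
  qed
  define dd where "dd c = D $$ (inv_into {..<l} \<phi> c, \<alpha>)" for c
  have injphi: "inj_on \<phi> {..<l}" using bphi unfolding bij_betw_def by simp
  have "(\<Sum>g<l. D $$ (g, \<alpha>) * wf x (\<phi> g)) = (\<Sum>g<l. dd (\<phi> g) * wf x (\<phi> g))"
    unfolding dd_def using injphi by (intro sum.cong) auto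
  also have "\<dots> = (\<Sum>c\<in>S. dd c * wf x c)" by (rule sum.reindex_bij_betw[OF bphi])
  finally have k2: "uu x a = (\<Sum>c\<in>S. dd c * wf x c)" using key by simp
  define d where "d c = (if c \<in> S then dd c else 0)" for c
  have fK: "finite Keep" using Ks finite_subset by blast
  have "(\<Sum>t\<in>Keep. d t * wf x t) = (\<Sum>c\<in>S. dd c * wf x c)"
    by (rule sum.mono_neutral_cong_right[OF fK]) (auto simp: S_def d_def)
  moreover have "\<forall>t\<in>Keep. d t \<in> F"
  proof
    fix t assume "t \<in> Keep"
    show "d t \<in> F"
    proof (cases "t \<in> S")
      case True
      then have "t \<in> \<phi> ` {..<l}" using bphi unfolding bij_betw_def by simp
      then have "inv_into {..<l} \<phi> t \<in> {..<l}" by (rule inv_into_into)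
      then have "inv_into {..<l} \<phi> t < l" by simp
      then show ?thesis using True D(2) al unfolding d_def dd_def by simp
    next
      case False then show ?thesis unfolding d_def by (simp add: sf_0 F_sub)
    qed
  qed
  ultimately show ?thesis using k2 by metis
qed

lemma core:
  fixes x :: "nat \<Rightarrow> 'a"
  assumes nz: "\<exists>i<k. x i \<noteq> 0" and Ks: "Keep \<subseteq> {..<nn}"
    and Kc: "\<forall>i<m. card (Keep \<inter> block_cols l r i) = l"
  shows "card {c \<in> Keep. wf x c = 0} < k"
proof -
  define Z where "Z = {c \<in> Keep. wf x c = 0}"
  define T where "T = Keep - Z"
  have fK: "finite Keep" using Ks finite_subset by blast
  have fT: "finite T" unfolding T_def using fK by simp
  have "\<forall>a<m * l. \<exists>d. (\<forall>t\<in>T. d t \<in> F) \<and> vec (m * l) (uu x) $ a = (\<Sum>t\<in>T. d t * wf x t)"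
  proof (intro allI impI)
    fix a assume a: "a < m * l"
    from coeff[OF Ks Kc a, of x] obtain d where d: "\<forall>t\<in>Keep. d t \<in> F" "uu x a = (\<Sum>t\<in>Keep. d t * wf x t)"
      by blast
    have "(\<Sum>t\<in>Keep. d t * wf x t) = (\<Sum>t\<in>T. d t * wf x t)"
      by (rule sum.mono_neutral_cong_right[OF fK]) (auto simp: T_def Z_def)
    then show "\<exists>d. (\<forall>t\<in>T. d t \<in> F) \<and> vec (m * l) (uu x) $ a = (\<Sum>t\<in>T. d t * wf x t)"
      using d a unfolding T_def by (intro exI[of _ d]) auto
  qed
  from rw_le[OF F_sub fT this] have "rank_weight F (m * l) (vec (m * l) (uu x)) \<le> card T" .
  moreover have "card T = m * l - card Z"
    unfolding T_def using keep_card[OF Ks Kc] fK by (simp add: card_Diff_subset Z_def)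
  moreover have "card Z \<le> m * l" using keep_card[OF Ks Kc] fK card_mono[of Keep Z] unfolding Z_def by auto
  ultimately show ?thesis using Gt_rw[OF nz] kml unfolding Z_def by linarith
qed

end



context pmds begin

lemma P_car: "Gt * BD \<in> carrier_mat k nn"
  using Gt_gen bd_carrier[of m l r Ms] by auto

lemma gen_dim: "dim_over UNIV nn (row_space UNIV (Gt * BD)) = k"
proof (rule rs_dim[OF sf_UNIV P_car])
  show "\<forall>i<k. \<forall>j<nn. (Gt * BD) $$ (i, j) \<in> UNIV" by simp
  show "\<forall>x. (\<forall>i<k. x i \<in> UNIV) \<longrightarrow> (\<forall>j<nn. (\<Sum>i<k. x i * (Gt * BD) $$ (i, j)) = 0) \<longrightarrow> (\<forall>i<k. x i = 0)"
  proof (intro allI impI)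
    fix x :: "nat \<Rightarrow> 'a" and i
    assume z: "\<forall>j<nn. (\<Sum>i<k. x i * (Gt * BD) $$ (i, j)) = 0" and i: "i < k"
    show "x i = 0"
    proof (rule ccontr)
      assume "x i \<noteq> 0"
      then have nz: "\<exists>i<k. x i \<noteq> 0" using i by blast
      define Keep where "Keep = (\<Union>j<m. {block_off l r j..<block_off l r j + l})"
      have sub: "{block_off l r j..<block_off l r j + l} \<subseteq> block_cols l r j" for j
        unfolding block_cols_def by auto
      have Ks: "Keep \<subseteq> {..<nn}" unfolding Keep_def using sub bc_sub by blast
      have Ki: "Keep \<inter> block_cols l r j = {block_off l r j..<block_off l r j + l}" if j: "j < m" for j
      proof
        show "Keep \<inter> block_cols l r j \<subseteq> {block_off l r j..<block_off l r j + l}"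
        proof
          fix c assume c: "c \<in> Keep \<inter> block_cols l r j"
          then obtain j' where j': "j' < m" "c \<in> {block_off l r j'..<block_off l r j' + l}"
            unfolding Keep_def by auto
          then have "c \<in> block_cols l r j'" using sub by blast
          then have "j' = j" using c bc_unique by blast
          then show "c \<in> {block_off l r j..<block_off l r j + l}" using j' by simp
        qed
        show "{block_off l r j..<block_off l r j + l} \<subseteq> Keep \<inter> block_cols l r j"
          using sub j unfolding Keep_def by blast
      qed
      have Kc: "\<forall>j<m. card (Keep \<inter> block_cols l r j) = l" using Ki by simp
      have "{c \<in> Keep. wf x c = 0} = Keep" using z exch Ks by auto
      then have "card Keep < k" using core[OF nz Ks Kc] by simp
      then show False using keep_card[OF Ks Kc] kml by simp
    qed
  qed
qed

lemma punct:
  assumes E: "E \<subseteq> {..<nn}" and Ec: "\<forall>i<m. card (E \<inter> block_cols l r i) = r i"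
  shows "is_MDS UNIV (m * l) k (row_space UNIV (submatrix (Gt * BD) UNIV ({..<nn} - E)))"
proof -
  define Keep where "Keep = {..<nn} - E"
  have Ks: "Keep \<subseteq> {..<nn}" unfolding Keep_def by auto
  have Kc: "\<forall>i<m. card (Keep \<inter> block_cols l r i) = l"
  proof (intro allI impI)
    fix i assume i: "i < m"
    have "Keep \<inter> block_cols l r i = block_cols l r i - E" unfolding Keep_def using bc_sub[OF i] by auto
    also have "card \<dots> = card (block_cols l r i) - card (block_cols l r i \<inter> E)"
      by (rule card_Diff_subset_Int) (simp add: block_cols_def)
    also have "\<dots> = l" using Ec i card_bc by (simp add: Int_commute)
    finally show "card (Keep \<inter> block_cols l r i) = l" .
  qed
  have cK: "card Keep = m * l" using keep_card[OF Ks Kc] .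
  have fK: "finite Keep" using Ks finite_subset by blast
  let ?P = "submatrix (Gt * BD) UNIV Keep"
  have dr: "dim_row (Gt * BD) = k" "dim_col (Gt * BD) = nn" using P_car by auto
  have cr: "card {i. i < k \<and> i \<in> (UNIV :: nat set)} = k" by simp
  have cc: "card {j. j < nn \<and> j \<in> Keep} = m * l" using Ks cK
    by (metis (no_types, lifting) Collect_cong lessThan_iff subsetD Collect_mem_eq)
  have Pc: "?P \<in> carrier_mat k (m * l)" unfolding carrier_mat_def using dim_submatrix[of "Gt * BD" UNIV Keep] dr cr cc by simp
  have Pi: "?P $$ (a, j) = (Gt * BD) $$ (a, pick Keep j)" if "a < k" "j < m * l" for a j
    using submatrix_index[of a "Gt * BD" UNIV j Keep] that dr cr cc by (simp add: pick_UNIV)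
  have pK: "pick Keep j \<in> Keep" if "j < m * l" for j using pick_in_set_le[of j Keep] that cK by simp
  have H: "\<forall>x. (\<forall>i<k. x i \<in> UNIV) \<longrightarrow> (\<exists>i<k. x i \<noteq> 0) \<longrightarrow>
              card {j. j < m * l \<and> (\<Sum>i<k. x i * ?P $$ (i, j)) = 0} < k"
  proof (intro allI impI)
    fix x :: "nat \<Rightarrow> 'a" assume nz: "\<exists>i<k. x i \<noteq> 0"
    have eq: "(\<Sum>i<k. x i * ?P $$ (i, j)) = wf x (pick Keep j)" if j: "j < m * l" for j
    proof -
      have "(\<Sum>i<k. x i * ?P $$ (i, j)) = (\<Sum>i<k. x i * (Gt * BD) $$ (i, pick Keep j))"
        using Pi j by (intro sum.cong) auto
      also have "\<dots> = wf x (pick Keep j)" using exch pK[OF j] Ks by blast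
      finally show ?thesis .
    qed
    have "{j. j < m * l \<and> (\<Sum>i<k. x i * ?P $$ (i, j)) = 0} = {j \<in> {..<m * l}. wf x (pick Keep j) = 0}"
      using eq by auto
    also have "card \<dots> = card {c \<in> Keep. wf x c = 0}"
      using bij_card_filter[OF pick_bij[OF fK]] cK by simp
    finally show "card {j. j < m * l \<and> (\<Sum>i<k. x i * ?P $$ (i, j)) = 0} < k"
      using core[OF nz Ks Kc] by simp
  qed
  show ?thesis unfolding Keep_def[symmetric]
    by (rule MDS_crit[OF sf_UNIV Pc _ k0 kml H]) simp
qed

lemma block:
  assumes i: "i < m"
  shows "is_MDS UNIV (r i + l) l (row_space UNIV (submatrix (Gt * BD) UNIV (block_cols l r i)))"
proof -
  let ?S = "submatrix (Gt * BD) UNIV (block_cols l r i)"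
  let ?o = "block_off l r i"
  have dr: "dim_row (Gt * BD) = k" "dim_col (Gt * BD) = nn" using P_car by auto
  have cr: "card {a. a < k \<and> a \<in> (UNIV :: nat set)} = k" by simp
  have cc: "card {j. j < nn \<and> j \<in> block_cols l r i} = l + r i"
  proof -
    have "{j. j < nn \<and> j \<in> block_cols l r i} = block_cols l r i" using bc_sub[OF i] by auto
    then show ?thesis using card_bc by simp
  qed
  have Sc: "?S \<in> carrier_mat k (l + r i)" unfolding carrier_mat_def
    using dim_submatrix[of "Gt * BD" UNIV "block_cols l r i"] dr cr cc by simp
  have Si: "?S $$ (a, g) = (Gt * BD) $$ (a, ?o + g)" if "a < k" "g < l + r i" for a g
  proof -
    have "pick (block_cols l r i) g = ?o + g" unfolding block_cols_def
      using pick_interval[of g "?o + (l + r i)" ?o] that by simp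
    then show ?thesis using submatrix_index[of a "Gt * BD" UNIV g "block_cols l r i"] that dr cr cc
      by (simp add: pick_UNIV)
  qed
  have comb: "(\<Sum>a<k. x a * ?S $$ (a, g)) = (\<Sum>b<l. uu x (i * l + b) * Ms i $$ (b, g))"
    if g: "g < l + r i" for x g
  proof -
    have c: "?o + g \<in> block_cols l r i" unfolding block_cols_def using g by simp
    have "(\<Sum>a<k. x a * ?S $$ (a, g)) = (\<Sum>a<k. x a * (Gt * BD) $$ (a, ?o + g))"
      using Si g by (intro sum.cong) auto
    also have "\<dots> = wf x (?o + g)" using exch bc_sub[OF i] c by blast
    also have "\<dots> = (\<Sum>b<l. uu x (i * l + b) * Ms i $$ (b, g))" using wf_block[OF i c] by simp
    finally show ?thesis .
  qed
  have Mc: "Ms i \<in> carrier_mat l (l + r i)" using Ms_car i by blast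
  have "row_space UNIV ?S = row_space UNIV (Ms i)"
  proof
    show "row_space UNIV ?S \<subseteq> row_space UNIV (Ms i)"
    proof
      fix v assume "v \<in> row_space UNIV ?S"
      then obtain x where x: "v = vec (l + r i) (\<lambda>g. \<Sum>a<k. x a * ?S $$ (a, g))" using rs_mem[OF Sc] by blast
      have "v = vec (l + r i) (\<lambda>g. \<Sum>b<l. uu x (i * l + b) * Ms i $$ (b, g))"
        unfolding x by (rule eq_vecI) (auto simp: comb)
      then show "v \<in> row_space UNIV (Ms i)" unfolding rs_mem[OF Mc]
        by (intro exI[of _ "\<lambda>b. uu x (i * l + b)"]) simp
    qed
    show "row_space UNIV (Ms i) \<subseteq> row_space UNIV ?S"
    proof
      fix v assume "v \<in> row_space UNIV (Ms i)"
      then obtain y where y: "v = vec (l + r i) (\<lambda>g. \<Sum>b<l. y b * Ms i $$ (b, g))" using rs_mem[OF Mc] by blast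
      obtain x where x: "\<forall>b<l. uu x (i * l + b) = y b" using surj_block[OF i, of y] by blast
      have "v = vec (l + r i) (\<lambda>g. \<Sum>a<k. x a * ?S $$ (a, g))"
        unfolding y using x by (intro eq_vecI) (auto simp: comb intro!: sum.cong)
      then show "v \<in> row_space UNIV ?S" unfolding rs_mem[OF Sc] by blast
    qed
  qed
  then show ?thesis using Ms_MDS_U[OF i] by (simp add: add.commute)
qed

end



theorem theorem13:
  fixes F :: "'a::{field,finite} set"
    and q N m l k :: nat and r :: "nat \<Rightarrow> nat"
    and Gt :: "'a mat" and Ms :: "nat \<Rightarrow> 'a mat"
  assumes q_pp: "\<exists>p e. prime p \<and> e > 0 \<and> q = p ^ e"
    and F_sub: "is_subfield F" and F_card: "card F = q"
    and big_card: "card (UNIV :: 'a set) = q ^ N"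
    and pos: "m > 0" "l > 0" "k > 0" "N > 0" "\<forall>i<m. r i > 0"
    and lk: "l \<le> k" "k \<le> m * l" and Nml: "N \<ge> m * l"
    and Gt_gen: "Gt \<in> carrier_mat k (m * l)"
    and Gt_MRD: "is_MRD F (m * l) k (row_space UNIV Gt)"
    and Ms_car: "\<forall>i<m. Ms i \<in> carrier_mat l (l + r i)"
    and Ms_F: "\<forall>i<m. \<forall>a<l. \<forall>b<l + r i. Ms i $$ (a, b) \<in> F"
    and Ms_MDS: "\<forall>i<m. is_MDS F (l + r i) l (row_space F (Ms i))"
  shows "is_PMDS_generator UNIV k l m r (Gt * block_diag m l r Ms)"
proof -
  interpret P: pmds F m l k r Gt Ms
    using F_sub pos lk Gt_gen Gt_MRD Ms_car Ms_F Ms_MDS by unfold_locales auto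
  have n: "(\<Sum>i<m. r i + l) = block_off l r m" by (simp add: off_n)
  have nn: "block_off l r m = m * l + (\<Sum>i<m. r i)"
    unfolding block_off_def by (simp add: sum.distrib)
  have "r 0 \<le> (\<Sum>i<m. r i)" using pos(1) by (intro member_le_sum) auto
  then have kn: "k < block_off l r m" using nn pos(5) pos(1) lk by fastforce
  have gen: "is_generator UNIV k (block_off l r m) (Gt * block_diag m l r Ms)"
    unfolding is_generator_def using P.P_car P.gen_dim by simp
  show ?thesis unfolding is_PMDS_generator_def Let_def n
    using gen kn P.block P.punct by blast
qed

end
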